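(* Let $\Gamma_n$ ($n\in\mathbb N$) be a sequence of nonatomic routing games on a fixed graph with fixed OD pairs $\mathcal I$, path sets $\mathcal P^i$ and edge costs $(c_e)_{e\in\mathcal E}$, where in $\Gamma_n$ OD pair $i$ has demand $m_n^i\ge 0$ and total inflow $M_n=\sum_i m_n^i>0$, with $M_n\to\omega\in\{0,\infty\}$. Let $c$ be a benchmark for $(c_e)$ at $\omega$ and suppose every OD pair is tight relative to $c$, i.e. $0<\alpha^i<\infty$ for all $i$, where $\alpha^i=\min_{p\in\mathcal P^i}\max_{e\in p}\alpha_e$ and $\alpha_e=\lim_{x\to\omega}c_e(x)/c(x)$. Then $\mathrm{PoA}(\Gamma_n)\to 1$.
   Context: A nonatomic routing game consists of: a finite directed multigraph with edge set $\mathcal E$; a finite set $\mathcal I$ of OD pairs, each $i$ with demand $m^i\ge 0$ and a nonempty finite set $\mathcal P^i$ of paths from its origin to its destination, the $\mathcal P^i$ pairwise disjoint, $\mathcal P=\bigcup_i\mathcal P^i$; and continuous nondecreasing edge costs $c_e:[0,\infty)\to[0,\infty)$. Feasible flows: $f\in\mathbb R_+^{\mathcal P}$ with $\sum_{p\in\mathcal P^i}f_p=m^i$; loads $x_e=\sum_{p\ni e}f_p$; path costs $c_p(f)=\sum_{e\in p}c_e(x_e)$. A Wardrop equilibrium is a feasible $f^*$ with $c_p(f^* )\le c_{p'}(f^* )$ whenever $p,p'\in\mathcal P^i$, $f^*_p>0$. Social cost $L(x)=\sum_e x_ec_e(x_e)$; $\mathrm{Opt}$ its minimum over feasible loads, $\mathrm{Eq}=L(x^*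 )$ at an equilibrium load, $\mathrm{PoA}=\mathrm{Eq}/\mathrm{Opt}$ (set to $1$ if $\mathrm{Opt}=0$). A function $g:(0,\infty)\to(0,\infty)$ is regularly varying at $\omega$ if $\lim_{t\to\omega}g(tx)/g(t)$ is finite and nonzero for every $x>0$; a regularly varying (at $\omega$) function $c$ is a benchmark for $(c_e)$ at $\omega$ if $\alpha_e=\lim_{x\to\omega}c_e(x)/c(x)\in[0,\infty]$ exists for every edge $e$. *)

theory Defs
  imports "HOL-Analysis.Analysis"
begin

text \<open>Paths are abstract objects of type 'p; each path p has an OD pair od p and an
  edge sequence pe p, which must be a walk with distinct edges from the origin to
  the destination of od p. Disjointness of the path sets P^i is automatic since
  od is a function.\<close>

fun is_walk :: "('e \<Rightarrow> 'v) \<Rightarrow> ('e \<Rightarrow> 'v) \<Rightarrow> 'v \<Rightarrow> 'v \<Rightarrow> 'e list \<Rightarrow> bool" where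
  "is_walk src tgt u v [] = (u = v)"
| "is_walk src tgt u v (e # es) = (src e = u \<and> is_walk src tgt (tgt e) v es)"

definition is_path :: "('e \<Rightarrow> 'v) \<Rightarrow> ('e \<Rightarrow> 'v) \<Rightarrow> 'v \<Rightarrow> 'v \<Rightarrow> 'e list \<Rightarrow> bool" where
  "is_path src tgt u v es \<longleftrightarrow> distinct es \<and> is_walk src tgt u v es"

definition routing_network ::
  "'e set \<Rightarrow> ('e \<Rightarrow> 'v) \<Rightarrow> ('e \<Rightarrow> 'v) \<Rightarrow> 'i set \<Rightarrow> ('i \<Rightarrow> 'v) \<Rightarrow> ('i \<Rightarrow> 'v)
   \<Rightarrow> 'p set \<Rightarrow> ('p \<Rightarrow> 'i) \<Rightarrow> ('p \<Rightarrow> 'e list) \<Rightarrow> ('e \<Rightarrow> real \<Rightarrow> real) \<Rightarrow> bool" where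
  "routing_network E src tgt I orig dest P od pe c \<longleftrightarrow>
     finite E \<and> finite I \<and> finite P \<and>
     od ` P \<subseteq> I \<and> (\<forall>i\<in>I. \<exists>p\<in>P. od p = i) \<and>
     (\<forall>p\<in>P. set (pe p) \<subseteq> E \<and> is_path src tgt (orig (od p)) (dest (od p)) (pe p)) \<and>
     (\<forall>e\<in>E. continuous_on {0..} (c e) \<and> mono_on {0..} (c e) \<and> (\<forall>x\<ge>0. c e x \<ge> 0))"

definition load :: "'p set \<Rightarrow> ('p \<Rightarrow> 'e list) \<Rightarrow> ('p \<Rightarrow> real) \<Rightarrow> 'e \<Rightarrow> real" where
  "load P pe f e = (\<Sum>p\<in>{p\<in>P. e \<in> set (pe p)}. f p)"

definition path_cost ::
  "'p set \<Rightarrow> ('p \<Rightarrow> 'e list) \<Rightarrow> ('e \<Rightarrow> real \<Rightarrow> real) \<Rightarrow> ('p \<Rightarrow> real) \<Rightarrow> 'p \<Rightarrow> real" where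
  "path_cost P pe c f p = (\<Sum>e\<in>set (pe p). c e (load P pe f e))"

definition feasible_flow ::
  "'i set \<Rightarrow> 'p set \<Rightarrow> ('p \<Rightarrow> 'i) \<Rightarrow> ('i \<Rightarrow> real) \<Rightarrow> ('p \<Rightarrow> real) \<Rightarrow> bool" where
  "feasible_flow I P od m f \<longleftrightarrow>
     (\<forall>p\<in>P. 0 \<le> f p) \<and> (\<forall>i\<in>I. (\<Sum>p\<in>{p\<in>P. od p = i}. f p) = m i)"

definition wardrop_eq ::
  "'i set \<Rightarrow> 'p set \<Rightarrow> ('p \<Rightarrow> 'i) \<Rightarrow> ('p \<Rightarrow> 'e list) \<Rightarrow> ('e \<Rightarrow> real \<Rightarrow> real)
   \<Rightarrow> ('i \<Rightarrow> real) \<Rightarrow> ('p \<Rightarrow> real) \<Rightarrow> bool" where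
  "wardrop_eq I P od pe c m f \<longleftrightarrow> feasible_flow I P od m f \<and>
     (\<forall>p\<in>P. \<forall>p'\<in>P. od p = od p' \<and> f p > 0 \<longrightarrow> path_cost P pe c f p \<le> path_cost P pe c f p')"

definition social_cost ::
  "'e set \<Rightarrow> 'p set \<Rightarrow> ('p \<Rightarrow> 'e list) \<Rightarrow> ('e \<Rightarrow> real \<Rightarrow> real) \<Rightarrow> ('p \<Rightarrow> real) \<Rightarrow> real" where
  "social_cost E P pe c f = (\<Sum>e\<in>E. load P pe f e * c e (load P pe f e))"

definition opt_cost ::
  "'e set \<Rightarrow> 'i set \<Rightarrow> 'p set \<Rightarrow> ('p \<Rightarrow> 'i) \<Rightarrow> ('p \<Rightarrow> 'e list) \<Rightarrow> ('e \<Rightarrow> real \<Rightarrow> real)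
   \<Rightarrow> ('i \<Rightarrow> real) \<Rightarrow> real" where
  "opt_cost E I P od pe c m = Inf (social_cost E P pe c ` {f. feasible_flow I P od m f})"

definition eq_cost ::
  "'e set \<Rightarrow> 'i set \<Rightarrow> 'p set \<Rightarrow> ('p \<Rightarrow> 'i) \<Rightarrow> ('p \<Rightarrow> 'e list) \<Rightarrow> ('e \<Rightarrow> real \<Rightarrow> real)
   \<Rightarrow> ('i \<Rightarrow> real) \<Rightarrow> real" where
  "eq_cost E I P od pe c m = social_cost E P pe c (SOME f. wardrop_eq I P od pe c m f)"

definition PoA ::
  "'e set \<Rightarrow> 'i set \<Rightarrow> 'p set \<Rightarrow> ('p \<Rightarrow> 'i) \<Rightarrow> ('p \<Rightarrow> 'e list) \<Rightarrow> ('e \<Rightarrow> real \<Rightarrow> real)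
   \<Rightarrow> ('i \<Rightarrow> real) \<Rightarrow> real" where
  "PoA E I P od pe c m =
     (if opt_cost E I P od pe c m = 0 then 1
      else eq_cost E I P od pe c m / opt_cost E I P od pe c m)"

definition omega_filter :: "ereal \<Rightarrow> real filter" where
  "omega_filter \<omega> = (if \<omega> = 0 then at_right 0 else at_top)"

definition regularly_varying :: "ereal \<Rightarrow> (real \<Rightarrow> real) \<Rightarrow> bool" where
  "regularly_varying \<omega> g \<longleftrightarrow> (\<forall>x>0. g x > 0) \<and>
     (\<forall>x>0. \<exists>L. L \<noteq> 0 \<and> ((\<lambda>t. g (t * x) / g t) \<longlongrightarrow> L) (omega_filter \<omega>))"

definition benchmark :: "ereal \<Rightarrow> 'e set \<Rightarrow> ('e \<Rightarrow> real \<Rightarrow> real) \<Rightarrow> (real \<Rightarrow> real) \<Rightarrow> bool" where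
  "benchmark \<omega> E c cb \<longleftrightarrow> regularly_varying \<omega> cb \<and>
     (\<forall>e\<in>E. \<exists>a::ereal. a \<ge> 0 \<and> ((\<lambda>x. ereal (c e x / cb x)) \<longlongrightarrow> a) (omega_filter \<omega>))"

definition alpha_edge :: "ereal \<Rightarrow> ('e \<Rightarrow> real \<Rightarrow> real) \<Rightarrow> (real \<Rightarrow> real) \<Rightarrow> 'e \<Rightarrow> ereal" where
  "alpha_edge \<omega> c cb e = Lim (omega_filter \<omega>) (\<lambda>x. ereal (c e x / cb x))"

definition alpha_od ::
  "ereal \<Rightarrow> 'p set \<Rightarrow> ('p \<Rightarrow> 'i) \<Rightarrow> ('p \<Rightarrow> 'e list) \<Rightarrow> ('e \<Rightarrow> real \<Rightarrow> real) \<Rightarrow> (real \<Rightarrow> real)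
   \<Rightarrow> 'i \<Rightarrow> ereal" where
  "alpha_od \<omega> P od pe c cb i =
     (INF p\<in>{p\<in>P. od p = i}. SUP e\<in>set (pe p). alpha_edge \<omega> c cb e)"

end

theory Submission
  imports Defs
begin

locale rnet =
  fixes E :: "'e set" and I :: "'i set" and P :: "'p set" and od :: "'p \<Rightarrow> 'i"
    and pe :: "'p \<Rightarrow> 'e list" and c :: "'e \<Rightarrow> real \<Rightarrow> real"
  assumes fE: "finite E" and fI: "finite I" and fP: "finite P"
    and odP: "od ` P \<subseteq> I" and ex_path: "\<And>i. i \<in> I \<Longrightarrow> \<exists>p\<in>P. od p = i"
    and peE: "\<And>p. p \<in> P \<Longrightarrow> set (pe p) \<subseteq> E"
    and cont: "\<And>e. e \<in> E \<Longrightarrow> continuous_on {0..} (c e)"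
    and cmono: "\<And>e. e \<in> E \<Longrightarrow> mono_on {0..} (c e)"
    and cnonneg: "\<And>e x. e \<in> E \<Longrightarrow> x \<ge> 0 \<Longrightarrow> c e x \<ge> 0"
begin

abbreviation ld where "ld f e \<equiv> load P pe f e"
abbreviation pc where "pc f p \<equiv> path_cost P pe c f p"
abbreviation SC where "SC f \<equiv> social_cost E P pe c f"
abbreviation feas where "feas m f \<equiv> feasible_flow I P od m f"

lemma cmono': "e \<in> E \<Longrightarrow> 0 \<le> x \<Longrightarrow> x \<le> y \<Longrightarrow> c e x \<le> c e y"
  using cmono by (auto simp: mono_on_def)

lemma sum_by_od: "(\<Sum>i\<in>I. \<Sum>p\<in>{p\<in>P. od p = i}. g p) = (\<Sum>p\<in>P. g p)"
proof -
  have "(\<Sum>p\<in>P. g p) = (\<Sum>i\<in>od ` P. \<Sum>p\<in>{p\<in>P. od p = i}. g p)"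
    using sum.image_gen[OF fP, of g od] .
  also have "\<dots> = (\<Sum>i\<in>I. \<Sum>p\<in>{p\<in>P. od p = i}. g p)"
    by (rule sum.mono_neutral_left[OF fI odP]) (force intro!: sum.neutral)
  finally show ?thesis by simp
qed

lemma exchange: "(\<Sum>e\<in>E. ld g e * w e) = (\<Sum>p\<in>P. g p * (\<Sum>e\<in>set (pe p). w e))"
proof -
  have "(\<Sum>e\<in>E. ld g e * w e) = (\<Sum>e\<in>E. \<Sum>p\<in>P. if e \<in> set (pe p) then g p * w e else 0)"
    unfolding load_def by (auto simp: sum_distrib_right sum.inter_filter[OF fP] intro!: sum.cong)
  also have "\<dots> = (\<Sum>p\<in>P. \<Sum>e\<in>E. if e \<in> set (pe p) then g p * w e else 0)"
    by (rule sum.swap)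
  also have "\<dots> = (\<Sum>p\<in>P. g p * (\<Sum>e\<in>set (pe p). w e))"
  proof (rule sum.cong[OF refl])
    fix p assume p: "p \<in> P"
    have "(\<Sum>e\<in>E. if e \<in> set (pe p) then g p * w e else 0) = (\<Sum>e\<in>{e\<in>E. e \<in> set (pe p)}. g p * w e)"
      by (simp add: sum.inter_filter[OF fE])
    also have "{e\<in>E. e \<in> set (pe p)} = set (pe p)" using peE[OF p] by auto
    finally show "(\<Sum>e\<in>E. if e \<in> set (pe p) then g p * w e else 0) = g p * (\<Sum>e\<in>set (pe p). w e)"
      by (simp add: sum_distrib_left)
  qed
  finally show ?thesis .
qed

lemma SC_paths: "SC f = (\<Sum>p\<in>P. f p * pc f p)"
  unfolding social_cost_def path_cost_def by (rule exchange)

lemma feas_sum: "feas m g \<Longrightarrow> (\<Sum>p\<in>P. g p) = (\<Sum>i\<in>I. m i)"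
  using sum_by_od[of g] by (simp add: feasible_flow_def)

lemma ld_nonneg: "feas m g \<Longrightarrow> ld g e \<ge> 0"
  unfolding load_def feasible_flow_def by (auto intro: sum_nonneg)

lemma ld_le: "feas m g \<Longrightarrow> ld g e \<le> (\<Sum>i\<in>I. m i)"
proof -
  assume g: "feas m g"
  have "ld g e \<le> (\<Sum>p\<in>P. g p)" unfolding load_def
    by (rule sum_mono2[OF fP]) (use g in \<open>auto simp: feasible_flow_def\<close>)
  thus ?thesis using feas_sum[OF g] by simp
qed

lemma pc_nonneg: "p \<in> P \<Longrightarrow> feas m g \<Longrightarrow> pc g p \<ge> 0"
  unfolding path_cost_def using peE by (auto intro!: sum_nonneg cnonneg ld_nonneg)

lemma edge_le_pc: "p \<in> P \<Longrightarrow> feas m g \<Longrightarrow> e \<in> set (pe p) \<Longrightarrow> c e (ld g e) \<le> pc g p"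
  unfolding path_cost_def
  by (rule member_le_sum) (use peE in \<open>auto intro!: cnonneg ld_nonneg\<close>)

lemma SC_nonneg: "feas m g \<Longrightarrow> SC g \<ge> 0"
  unfolding social_cost_def by (auto intro!: sum_nonneg mult_nonneg_nonneg ld_nonneg cnonneg)

lemma VI:
  assumes f: "wardrop_eq I P od pe c m f" and g: "feas m g"
  shows "(\<Sum>p\<in>P. f p * pc f p) \<le> (\<Sum>p\<in>P. g p * pc f p)"
proof -
  have ff: "feas m f" using f by (simp add: wardrop_eq_def)
  have "(\<Sum>p\<in>{p\<in>P. od p = i}. f p * pc f p) \<le> (\<Sum>p\<in>{p\<in>P. od p = i}. g p * pc f p)"
    if i: "i \<in> I" for i
  proof -
    let ?Q = "{p\<in>P. od p = i}"
    have fQ: "finite ?Q" using fP by auto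
    have ne: "?Q \<noteq> {}" using ex_path[OF i] by auto
    define lam where "lam = Min (pc f ` ?Q)"
    have lam_le: "lam \<le> pc f p" if "p \<in> ?Q" for p
      unfolding lam_def using fQ that by auto
    have le_lam: "pc f p \<le> lam" if "p \<in> ?Q" "f p > 0" for p
    proof -
      have "lam \<in> pc f ` ?Q" unfolding lam_def using fQ ne by (intro Min_in) auto
      then obtain q where "q \<in> ?Q" "lam = pc f q" by auto
      thus ?thesis using f that unfolding wardrop_eq_def by auto
    qed
    have "(\<Sum>p\<in>?Q. f p * pc f p) \<le> (\<Sum>p\<in>?Q. f p * lam)"
    proof (rule sum_mono)
      fix p assume p: "p \<in> ?Q"
      show "f p * pc f p \<le> f p * lam"
      proof (cases "f p > 0")
        case True thus ?thesis using le_lam[OF p] by simp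
      next
        case False hence "f p = 0" using ff p by (auto simp: feasible_flow_def)
        thus ?thesis by simp
      qed
    qed
    also have "\<dots> = m i * lam" using ff i by (simp add: feasible_flow_def sum_distrib_right[symmetric])
    also have "\<dots> = (\<Sum>p\<in>?Q. g p * lam)" using g i by (simp add: feasible_flow_def sum_distrib_right[symmetric])
    also have "\<dots> \<le> (\<Sum>p\<in>?Q. g p * pc f p)"
      by (rule sum_mono) (use g lam_le in \<open>auto simp: feasible_flow_def intro: mult_left_mono\<close>)
    finally show ?thesis .
  qed
  hence "(\<Sum>i\<in>I. \<Sum>p\<in>{p\<in>P. od p = i}. f p * pc f p) \<le> (\<Sum>i\<in>I. \<Sum>p\<in>{p\<in>P. od p = i}. g p * pc f p)"
    by (rule sum_mono)
  thus ?thesis by (simp add: sum_by_od)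
qed

end

context rnet begin

definition Phi where "Phi e z = integral {0..z} (c e)"
definition Pot where "Pot f = (\<Sum>e\<in>E. Phi e (ld f e))"

lemma c_int: "e \<in> E \<Longrightarrow> 0 \<le> a \<Longrightarrow> c e integrable_on {a..b}"
  by (rule integrable_continuous_interval, rule continuous_on_subset[OF cont]) auto

lemma Phi_diff: "e \<in> E \<Longrightarrow> 0 \<le> a \<Longrightarrow> a \<le> b \<Longrightarrow> Phi e b - Phi e a = integral {a..b} (c e)"
  unfolding Phi_def using Henstock_Kurzweil_Integration.integral_combine[where f="c e" and a=0 and c=a and b=b] c_int[of e 0 b] by simp

lemma int_bounds:
  assumes e: "e \<in> E" and a: "0 \<le> a" "a \<le> b"
  shows "c e a * (b - a) \<le> integral {a..b} (c e)" "integral {a..b} (c e) \<le> c e b * (b - a)"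
proof -
  have "integral {a..b} (\<lambda>_. c e a) \<le> integral {a..b} (c e)"
    by (rule integral_le) (use c_int[OF e a(1)] cmono'[OF e] a in auto)
  thus "c e a * (b - a) \<le> integral {a..b} (c e)" using a by (simp add: mult.commute)
  have "integral {a..b} (c e) \<le> integral {a..b} (\<lambda>_. c e b)"
    by (rule integral_le) (use c_int[OF e a(1)] cmono'[OF e] a in auto)
  thus "integral {a..b} (c e) \<le> c e b * (b - a)" using a by (simp add: mult.commute)
qed

lemma Phi_nonneg: "e \<in> E \<Longrightarrow> 0 \<le> z \<Longrightarrow> 0 \<le> Phi e z"
  using int_bounds(1)[of e 0 z] cnonneg[of e 0] by (simp add: Phi_def) (smt (verit) mult_nonneg_nonneg)

lemma Phi_le: "e \<in> E \<Longrightarrow> 0 \<le> z \<Longrightarrow> Phi e z \<le> z * c e z"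
  using int_bounds(2)[of e 0 z] by (simp add: Phi_def mult.commute)

lemma Phi_up: "e \<in> E \<Longrightarrow> 0 \<le> a \<Longrightarrow> a \<le> b \<Longrightarrow> Phi e b - Phi e a \<le> c e b * (b - a)"
  using Phi_diff int_bounds(2) by simp

lemma Phi_lo: "e \<in> E \<Longrightarrow> 0 \<le> a \<Longrightarrow> a \<le> b \<Longrightarrow> c e a * (b - a) \<le> Phi e b - Phi e a"
  using Phi_diff int_bounds(1) by simp

lemma Phi_mono: "e \<in> E \<Longrightarrow> 0 \<le> a \<Longrightarrow> a \<le> b \<Longrightarrow> Phi e a \<le> Phi e b"
  using Phi_lo[of e a b] cnonneg[of e a] by (smt (verit) mult_nonneg_nonneg)

lemma Phi_sub: "e \<in> E \<Longrightarrow> 0 \<le> a \<Longrightarrow> 0 \<le> b \<Longrightarrow> c e a * (b - a) \<le> Phi e b - Phi e a"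
proof (cases "a \<le> b")
  case True
  assume "e \<in> E" "0 \<le> a" "0 \<le> b" thus ?thesis using Phi_lo True by simp
next
  case False
  assume e: "e \<in> E" "0 \<le> a" "0 \<le> b"
  have "Phi e a - Phi e b \<le> c e a * (a - b)" using Phi_up[of e b a] e False by simp
  thus ?thesis by (simp add: algebra_simps)
qed

lemma Pot_eq_le:
  assumes f: "wardrop_eq I P od pe c m f" and g: "feas m g"
  shows "Pot f \<le> Pot g"
proof -
  have ff: "feas m f" using f by (simp add: wardrop_eq_def)
  have "(\<Sum>e\<in>E. ld f e * c e (ld f e)) \<le> (\<Sum>e\<in>E. ld g e * c e (ld f e))"
    unfolding exchange using VI[OF f g] by (simp add: path_cost_def)
  hence "0 \<le> (\<Sum>e\<in>E. c e (ld f e) * (ld g e - ld f e))"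
    by (simp add: sum_subtractf algebra_simps)
  also have "\<dots> \<le> (\<Sum>e\<in>E. Phi e (ld g e) - Phi e (ld f e))"
    by (rule sum_mono, rule Phi_sub) (use ld_nonneg[OF ff] ld_nonneg[OF g] in auto)
  finally show ?thesis by (simp add: Pot_def sum_subtractf)
qed

end

context rnet begin

lemma cc_cont: "e \<in> E \<Longrightarrow> isCont (\<lambda>z. c e (max z 0)) z"
proof -
  assume e: "e \<in> E"
  have "continuous_on UNIV (\<lambda>z. c e (max z 0))"
    by (rule continuous_on_compose2[OF cont[OF e], of UNIV "\<lambda>z. max z (0::real)"])
       (auto intro!: continuous_intros)
  thus ?thesis by (simp add: continuous_on_eq_continuous_at)
qed

lemma ld_cont: "continuous_on S (\<lambda>f. ld f e)"
  unfolding load_def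
  by (intro continuous_on_sum continuous_on_subset[OF continuous_on_product_coordinates]) auto

lemma eq_exists:
  assumes m: "\<And>i. i \<in> I \<Longrightarrow> m i \<ge> 0"
  shows "\<exists>f. wardrop_eq I P od pe c m f"
proof -
  define Mt where "Mt = (\<Sum>i\<in>I. m i)"
  define X where "X = (\<lambda>p. if p \<in> P then {0..Mt} else {0::real})"
  define S where "S = Pi\<^sub>E UNIV X \<inter> (\<Inter>i\<in>I. {f. (\<Sum>p\<in>{p\<in>P. od p = i}. f p) = m i})"
  have cB: "compact (Pi\<^sub>E UNIV X)"
  proof -
    have "compactin (product_topology (\<lambda>_. euclidean) UNIV) (Pi\<^sub>E UNIV X)"
      by (subst compactin_PiE) (auto simp: X_def)
    thus ?thesis by (simp add: euclidean_product_topology)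
  qed
  have cl: "closed (\<Inter>i\<in>I. {f::'p\<Rightarrow>real. (\<Sum>p\<in>{p\<in>P. od p = i}. f p) = m i})"
    by (intro closed_INT ballI closed_Collect_eq continuous_on_sum continuous_on_const
        continuous_on_product_coordinates)
  have cS: "compact S" unfolding S_def using cB cl by (rule compact_Int_closed)
  have S_feas: "feas m f" if "f \<in> S" for f
    using that m unfolding S_def X_def feasible_flow_def PiE_def Pi_def
    by (auto split: if_splits)
  have feas_S: "f \<in> S" if "feas m f" "\<And>p. p \<notin> P \<Longrightarrow> f p = 0" for f
  proof -
    have "f p \<le> Mt" if "p \<in> P" for p
    proof -
      have "f p \<le> (\<Sum>p\<in>P. f p)" using \<open>feas m f\<close> that
        by (intro member_le_sum fP) (auto simp: feasible_flow_def)
      thus ?thesis using feas_sum[OF \<open>feas m f\<close>] by (simp add: Mt_def)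
    qed
    thus ?thesis using that unfolding S_def X_def PiE_def Pi_def extensional_def feasible_flow_def
      by auto
  qed
  define f0 where "f0 = (\<lambda>p. if p \<in> P then m (od p) / card {q\<in>P. od q = od p} else 0)"
  have "feas m f0"
  proof -
    have "(\<Sum>p\<in>{p\<in>P. od p = i}. f0 p) = m i" if i: "i \<in> I" for i
    proof -
      have cpos: "card {q\<in>P. od q = i} > 0" using ex_path[OF i] fP
        by (auto simp: card_gt_0_iff)
      have "(\<Sum>p\<in>{p\<in>P. od p = i}. f0 p) = (\<Sum>p\<in>{p\<in>P. od p = i}. m i / card {q\<in>P. od q = i})"
        by (rule sum.cong) (auto simp: f0_def)
      also have "\<dots> = m i" using cpos by simp
      finally show ?thesis .
    qed
    moreover have "\<forall>p\<in>P. 0 \<le> f0 p" using m odP by (auto simp: f0_def)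
    ultimately show ?thesis by (simp add: feasible_flow_def)
  qed
  hence "f0 \<in> S" by (intro feas_S) (auto simp: f0_def)
  hence Sne: "S \<noteq> {}" by auto
  have cPot: "continuous_on S Pot"
    unfolding Pot_def
  proof (intro continuous_on_sum)
    fix e assume e: "e \<in> E"
    show "continuous_on S (\<lambda>f. Phi e (ld f e))"
    proof (rule continuous_on_compose2[of "{0..Mt}" "Phi e" S "\<lambda>f. ld f e"])
      show "continuous_on {0..Mt} (Phi e)" unfolding Phi_def
        by (rule indefinite_integral_continuous_1, rule c_int[OF e]) simp
      show "continuous_on S (\<lambda>f. ld f e)" by (rule ld_cont)
      show "(\<lambda>f. ld f e) ` S \<subseteq> {0..Mt}"
        using S_feas ld_nonneg ld_le by (force simp: Mt_def)
    qed
  qed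
  obtain fm where fmS: "fm \<in> S" and fmin: "\<And>g. g \<in> S \<Longrightarrow> Pot fm \<le> Pot g"
    using continuous_attains_inf[OF cS Sne cPot] by auto
  have fmf: "feas m fm" using S_feas[OF fmS] .
  have fm0: "fm q = 0" if "q \<notin> P" for q
  proof -
    have "fm q \<in> X q" using fmS unfolding S_def PiE_def Pi_def by auto
    thus ?thesis using that by (simp add: X_def)
  qed
  have "pc fm p \<le> pc fm p'" if p: "p \<in> P" "p' \<in> P" "od p = od p'" "fm p > 0" for p p'
  proof (rule ccontr)
    assume "\<not> pc fm p \<le> pc fm p'"
    hence lt: "pc fm p' < pc fm p" by simp
    hence pp: "p \<noteq> p'" by auto
    define fd where "fd = (\<lambda>d q. fm q + ((if q = p' then d else 0) - (if q = p then d else 0)))"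
    define x where "x = (\<lambda>e. ld fm e)"
    have fdS: "fd d \<in> S" if d: "0 < d" "d \<le> fm p" for d
    proof (rule feas_S)
      have sums: "(\<Sum>q\<in>Q. fd d q) = (\<Sum>q\<in>Q. fm q) + ((if p' \<in> Q then d else 0) - (if p \<in> Q then d else 0))"
        if "finite Q" for Q
        using that by (simp add: fd_def sum.distrib sum_subtractf sum.delta)
      show "feas m (fd d)"
        unfolding feasible_flow_def
      proof safe
        fix q assume q: "q \<in> P"
        show "0 \<le> fd d q" using fmf q d pp by (auto simp: fd_def feasible_flow_def)
      next
        fix i assume i: "i \<in> I"
        have "finite {q\<in>P. od q = i}" using fP by auto
        from sums[OF this] show "(\<Sum>q\<in>{q\<in>P. od q = i}. fd d q) = m i"
          using fmf i p by (auto simp: feasible_flow_def)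
      qed
      show "fd d q = 0" if "q \<notin> P" for q using that p fm0 by (auto simp: fd_def)
    qed
    have ldfd: "ld (fd d) e = x e + ((if e \<in> set (pe p') then d else 0) - (if e \<in> set (pe p) then d else 0))"
      for d e
    proof -
      have fin: "finite {q\<in>P. e \<in> set (pe q)}" using fP by auto
      show ?thesis unfolding load_def x_def fd_def
        using p by (simp add: sum.distrib sum_subtractf sum.delta[OF fin])
    qed
    define cc where "cc = (\<lambda>e z. c e (max z 0))"
    define w where "w = (\<lambda>d e. (if e \<in> set (pe p') \<and> e \<notin> set (pe p) then cc e (x e + d) else 0)
       - (if e \<in> set (pe p) \<and> e \<notin> set (pe p') then cc e (x e - d) else 0))"
    have x0: "0 \<le> x e" for e using ld_nonneg[OF fmf] by (simp add: x_def)
    have xp: "fm p \<le> x e" if "e \<in> set (pe p)" for e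
      unfolding x_def load_def using that p fmf fP
      by (intro member_le_sum) (auto simp: feasible_flow_def)
    have step: "Pot (fd d) - Pot fm \<le> d * (\<Sum>e\<in>E. w d e)" if d: "0 < d" "d \<le> fm p" for d
    proof -
      have "Pot (fd d) - Pot fm = (\<Sum>e\<in>E. Phi e (ld (fd d) e) - Phi e (x e))"
        by (simp add: Pot_def x_def sum_subtractf)
      also have "\<dots> \<le> (\<Sum>e\<in>E. d * w d e)"
      proof (rule sum_mono)
        fix e assume e: "e \<in> E"
        consider "e \<in> set (pe p')" "e \<notin> set (pe p)" | "e \<in> set (pe p)" "e \<notin> set (pe p')"
          | "(e \<in> set (pe p)) = (e \<in> set (pe p'))" by blast
        thus "Phi e (ld (fd d) e) - Phi e (x e) \<le> d * w d e"
        proof cases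
          case 1
          have "Phi e (x e + d) - Phi e (x e) \<le> c e (x e + d) * (x e + d - x e)"
            by (rule Phi_up) (use e x0[of e] d in auto)
          thus ?thesis using 1 x0[of e] d by (simp add: ldfd w_def cc_def mult.commute)
        next
          case 2
          have xd: "0 \<le> x e - d" using xp[OF 2(1)] d by simp
          have "c e (x e - d) * (x e - (x e - d)) \<le> Phi e (x e) - Phi e (x e - d)"
            by (rule Phi_lo) (use e xd d in auto)
          thus ?thesis using 2 xd by (simp add: ldfd w_def cc_def mult.commute)
        next
          case 3 thus ?thesis by (auto simp: ldfd w_def)
        qed
      qed
      finally show ?thesis by (simp add: sum_distrib_left)
    qed
    have W0: "(\<Sum>e\<in>E. w 0 e) = pc fm p' - pc fm p"
    proof -
      have pcE: "pc fm q = (\<Sum>e\<in>E. if e \<in> set (pe q) then c e (x e) else 0)" if "q \<in> P" for q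
      proof -
        have "pc fm q = (\<Sum>e\<in>{e\<in>E. e \<in> set (pe q)}. c e (x e))"
          unfolding path_cost_def x_def using peE[OF that]
          by (intro sum.cong) auto
        thus ?thesis by (simp add: sum.inter_filter[OF fE])
      qed
      have "(\<Sum>e\<in>E. w 0 e) = (\<Sum>e\<in>E. (if e \<in> set (pe p') then c e (x e) else 0) - (if e \<in> set (pe p) then c e (x e) else 0))"
        by (rule sum.cong) (auto simp: w_def cc_def x0 max_absorb1)
      thus ?thesis using pcE p by (simp add: sum_subtractf)
    qed
    have "((\<lambda>d. \<Sum>e\<in>E. w d e) \<longlongrightarrow> (\<Sum>e\<in>E. w 0 e)) (at_right 0)"
    proof (intro tendsto_sum)
      fix e assume e: "e \<in> E"
      have t1: "((\<lambda>d. cc e (x e + d)) \<longlongrightarrow> cc e (x e + 0)) (at_right 0)"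
        unfolding cc_def by (rule isCont_tendsto_compose[OF cc_cont[OF e]]) (intro tendsto_intros)
      have t2: "((\<lambda>d. cc e (x e - d)) \<longlongrightarrow> cc e (x e - 0)) (at_right 0)"
        unfolding cc_def by (rule isCont_tendsto_compose[OF cc_cont[OF e]]) (intro tendsto_intros)
      show "((\<lambda>d. w d e) \<longlongrightarrow> w 0 e) (at_right 0)"
        unfolding w_def using t1 t2 by (auto intro!: tendsto_intros)
    qed
    hence "\<forall>\<^sub>F d in at_right 0. (\<Sum>e\<in>E. w d e) < 0"
      using W0 lt by (intro order_tendstoD) auto
    moreover have "\<forall>\<^sub>F d in at_right 0. 0 < d \<and> d \<le> fm p"
      using p(4) by (simp add: eventually_at_right_field) (meson less_le_not_le)
    ultimately have "\<forall>\<^sub>F d in at_right (0::real). (\<Sum>e\<in>E. w d e) < 0 \<and> 0 < d \<and> d \<le> fm p"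
      by eventually_elim auto
    then obtain d where d: "(\<Sum>e\<in>E. w d e) < 0" "0 < d" "d \<le> fm p"
      using eventually_happens[of _ "at_right (0::real)"] by auto
    have "Pot (fd d) - Pot fm < 0"
      using step[OF d(2,3)] d mult_pos_neg by (smt (verit))
    thus False using fmin[OF fdS[OF d(2,3)]] by simp
  qed
  thus ?thesis using fmf by (auto simp: wardrop_eq_def)
qed

end

lemma riemann:
  fixes g :: "real \<Rightarrow> real"
  assumes mono: "mono_on {0..1} g" and nn: "\<And>x. 0 \<le> x \<Longrightarrow> x \<le> 1 \<Longrightarrow> 0 \<le> g x" and N: "N > 0"
  shows "(\<Sum>k\<in>{1..<N}. g (real k / real N)) / real N \<le> integral {0..1} g"
    and "integral {0..1} g \<le> (\<Sum>k\<in>{1..N}. g (real k / real N)) / real N"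
proof -
  have int: "g integrable_on {a..b}" if "0 \<le> a" "b \<le> 1" for a b
  proof (cases "a \<le> b")
    case True
    show ?thesis by (rule integrable_on_mono_on, rule mono_on_subset[OF mono]) (use that in auto)
  next
    case False thus ?thesis by (simp add: integrable_on_empty)
  qed
  have piece: "g (real k / real N) / real N \<le> integral {real k / real N..real (Suc k) / real N} g
      \<and> integral {real k / real N..real (Suc k) / real N} g \<le> g (real (Suc k) / real N) / real N"
    if k: "k < N" for k
  proof -
    let ?a = "real k / real N" and ?b = "real (Suc k) / real N"
    have ab: "0 \<le> ?a" "?a \<le> ?b" "?b \<le> 1" using k N by (auto simp: divide_right_mono)
    have len: "?b - ?a = 1 / real N" by (simp add: diff_divide_distrib[symmetric])
    have mn: "g ?a \<le> g x" "g x \<le> g ?b" if "x \<in> {?a..?b}" for x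
    proof -
      have x: "?a \<le> x" "x \<le> ?b" using that by auto
      have x0: "0 \<le> x" "x \<le> 1" using order_trans[OF ab(1) x(1)] order_trans[OF x(2) ab(3)] by auto
      have i: "?a \<in> {0..1}" "x \<in> {0..1}" "?b \<in> {0..1}"
        using x0 ab(1) order_trans[OF ab(2) ab(3)] ab(3) by auto
      show "g ?a \<le> g x" by (rule mono_onD[OF mono i(1) i(2) x(1)])
      show "g x \<le> g ?b" by (rule mono_onD[OF mono i(2) i(3) x(2)])
    qed
    have "integral {?a..?b} (\<lambda>_. g ?a) \<le> integral {?a..?b} g"
      by (rule integral_le) (use int[of ?a ?b] ab mn in auto)
    moreover have "integral {?a..?b} g \<le> integral {?a..?b} (\<lambda>_. g ?b)"
      by (rule integral_le) (use int[of ?a ?b] ab mn in auto)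
    ultimately show ?thesis using ab len by simp
  qed
  have split: "integral {0..real n / real N} g = (\<Sum>k<n. integral {real k / real N..real (Suc k) / real N} g)"
    if "n \<le> N" for n
    using that
  proof (induction n)
    case 0 show ?case by simp
  next
    case (Suc n)
    have le: "0 \<le> real n / real N" "real n / real N \<le> real (Suc n) / real N" "real (Suc n) / real N \<le> 1"
      using Suc.prems N by (auto simp: divide_right_mono)
    have "integral {0..real n / real N} g + integral {real n / real N..real (Suc n) / real N} g
          = integral {0..real (Suc n) / real N} g"
      by (rule Henstock_Kurzweil_Integration.integral_combine) (use le int in auto)
    thus ?case using Suc by simp
  qed
  have I1: "integral {0..1} g = (\<Sum>k<N. integral {real k / real N..real (Suc k) / real N} g)"
    using split[of N] N by simp
  have "(\<Sum>k\<in>{1..<N}. g (real k / real N)) \<le> (\<Sum>k<N. g (real k / real N))"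
    by (rule sum_mono2) (use nn N in \<open>auto simp: divide_le_eq\<close>)
  also have "\<dots> / real N = (\<Sum>k<N. g (real k / real N) / real N)" by (simp add: sum_divide_distrib)
  also have "\<dots> \<le> integral {0..1} g" unfolding I1 by (rule sum_mono) (use piece in auto)
  finally show "(\<Sum>k\<in>{1..<N}. g (real k / real N)) / real N \<le> integral {0..1} g"
    using N by (simp add: divide_right_mono)
  have "integral {0..1} g \<le> (\<Sum>k<N. g (real (Suc k) / real N) / real N)"
    unfolding I1 by (rule sum_mono) (use piece in auto)
  also have "\<dots> = (\<Sum>k<N. g (real (Suc k) / real N)) / real N" by (simp add: sum_divide_distrib)
  also have "(\<Sum>k<N. g (real (Suc k) / real N)) = (\<Sum>k\<in>{1..N}. g (real k / real N))"
    by (rule sum.reindex_bij_witness[of _ "\<lambda>k. k - 1" Suc]) auto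
  finally show "integral {0..1} g \<le> (\<Sum>k\<in>{1..N}. g (real k / real N)) / real N" .
qed

locale asy =
  fixes F :: "real filter" and cb :: "real \<Rightarrow> real"
  assumes Fnb: "F \<noteq> bot"
    and Fpos: "\<forall>\<^sub>F x in F. x > 0"
    and Fscale: "\<And>s. s > 0 \<Longrightarrow> filterlim (\<lambda>x. x * s) F F"
    and Fint: "\<And>G \<eta>. eventually G F \<Longrightarrow> 0 < \<eta> \<Longrightarrow> \<eta> \<le> 1 \<Longrightarrow>
                  \<forall>\<^sub>F M in F. \<forall>z. \<eta> * M \<le> z \<and> z \<le> M \<longrightarrow> G z"
    and cbpos: "\<And>x. x > 0 \<Longrightarrow> cb x > 0"
    and rv: "\<And>s. s > 0 \<Longrightarrow> \<exists>L. L \<noteq> 0 \<and> ((\<lambda>t. cb (t * s) / cb t) \<longlongrightarrow> L) F"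
    and wit: "\<exists>ce a. a > 0 \<and> mono_on {0..} ce \<and> ((\<lambda>x. ce x / cb x) \<longlongrightarrow> a) F"
begin

definition h where "h s = Lim F (\<lambda>t. cb (t * s) / cb t)"
definition hh where "hh s = (if s \<le> 0 then 0 else h s)"
definition kappa where "kappa = integral {0..1} hh"

lemma comp: "(\<phi> \<longlongrightarrow> l) F \<Longrightarrow> s > 0 \<Longrightarrow> ((\<lambda>t. \<phi> (t * s)) \<longlongrightarrow> l) F"
  by (rule filterlim_compose[OF _ Fscale])

lemma ev_comp: "eventually P F \<Longrightarrow> s > 0 \<Longrightarrow> \<forall>\<^sub>F t in F. P (t * s)"
  by (rule eventually_compose_filterlim[OF _ Fscale])

lemma h_tend: "s > 0 \<Longrightarrow> ((\<lambda>t. cb (t * s) / cb t) \<longlongrightarrow> h s) F"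
proof -
  assume s: "s > 0"
  obtain L where L: "L \<noteq> 0" "((\<lambda>t. cb (t * s) / cb t) \<longlongrightarrow> L) F" using rv[OF s] by auto
  have "h s = L" unfolding h_def by (rule tendsto_Lim) (use Fnb L in auto)
  thus ?thesis using L by simp
qed

lemma h_pos: "s > 0 \<Longrightarrow> h s > 0"
proof -
  assume s: "s > 0"
  obtain L where L: "L \<noteq> 0" "((\<lambda>t. cb (t * s) / cb t) \<longlongrightarrow> L) F" using rv[OF s] by auto
  have "h s = L" using tendsto_unique[OF Fnb h_tend[OF s] L(2)] .
  moreover have "L \<ge> 0"
  proof (rule tendsto_lowerbound[OF L(2)])
    show "\<forall>\<^sub>F t in F. 0 \<le> cb (t * s) / cb t"
      using Fpos
    proof eventually_elim
      case (elim t)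
      have "cb (t * s) > 0" "cb t > 0" using cbpos elim s by auto
      thus ?case by simp
    qed
  qed (use Fnb in auto)
  ultimately show ?thesis using L by auto
qed

lemma h_mult: "s > 0 \<Longrightarrow> u > 0 \<Longrightarrow> h (s * u) = h s * h u"
proof -
  assume s: "s > 0" and u: "u > 0"
  have t1: "((\<lambda>t. cb (t * s * u) / cb (t * s) * (cb (t * s) / cb t)) \<longlongrightarrow> h u * h s) F"
    by (intro tendsto_mult comp[OF h_tend[OF u] s] h_tend[OF s])
  have "\<forall>\<^sub>F t in F. cb (t * s * u) / cb (t * s) * (cb (t * s) / cb t) = cb (t * (s * u)) / cb t"
    using Fpos
  proof eventually_elim
    case (elim t)
    have "cb (t * s) > 0" using cbpos elim s by auto
    hence "cb (t * s * u) / cb (t * s) * (cb (t * s) / cb t) = cb (t * s * u) / cb t" by simp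
    thus ?case by (simp add: mult.assoc)
  qed
  from Lim_transform_eventually[OF t1 this]
  have "((\<lambda>t. cb (t * (s * u)) / cb t) \<longlongrightarrow> h u * h s) F" .
  from tendsto_unique[OF Fnb h_tend[of "s * u"] this] s u show ?thesis by (simp add: mult.commute)
qed

lemma h1: "h 1 = 1"
proof -
  have "\<forall>\<^sub>F t in F. 1 = cb (t * 1) / cb t" using Fpos
  proof eventually_elim
    case (elim t) thus ?case using cbpos[OF elim] by simp
  qed
  from Lim_transform_eventually[OF tendsto_const this] have "((\<lambda>t. cb (t * 1) / cb t) \<longlongrightarrow> 1) F" .
  from tendsto_unique[OF Fnb h_tend[of 1] this] show ?thesis by simp
qed

lemma scaled:
  assumes tend: "((\<lambda>x. ce x / cb x) \<longlongrightarrow> a) F" and s: "s > 0"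
  shows "((\<lambda>t. ce (t * s) / cb t) \<longlongrightarrow> a * h s) F"
proof -
  have t1: "((\<lambda>t. ce (t * s) / cb (t * s) * (cb (t * s) / cb t)) \<longlongrightarrow> a * h s) F"
    by (intro tendsto_mult comp[OF tend s] h_tend[OF s])
  have "\<forall>\<^sub>F t in F. ce (t * s) / cb (t * s) * (cb (t * s) / cb t) = ce (t * s) / cb t"
    using Fpos
  proof eventually_elim
    case (elim t)
    have "cb (t * s) > 0" using cbpos elim s by auto
    thus ?case by simp
  qed
  from Lim_transform_eventually[OF t1 this] show ?thesis .
qed

lemma h_mono: "0 < s \<Longrightarrow> s \<le> u \<Longrightarrow> h s \<le> h u"
proof -
  assume su: "0 < s" "s \<le> u"
  obtain ce a where w: "a > 0" "mono_on {0..} ce" "((\<lambda>x. ce x / cb x) \<longlongrightarrow> a) F" using wit by auto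
  have "a * h s \<le> a * h u"
  proof (rule tendsto_le[OF _ scaled[OF w(3)] scaled[OF w(3)]])
    show "\<forall>\<^sub>F t in F. ce (t * s) / cb t \<le> ce (t * u) / cb t"
      using Fpos
    proof eventually_elim
      case (elim t)
      have "ce (t * s) \<le> ce (t * u)" by (rule mono_onD[OF w(2)]) (use elim su in auto)
      thus ?case using cbpos[OF elim] by (simp add: divide_right_mono)
    qed
  qed (use Fnb su in auto)
  thus ?thesis using w(1) by simp
qed

lemma hh_nn: "0 \<le> hh s" using h_pos by (simp add: hh_def less_imp_le)

lemma hh_mono: "mono_on {0..1} hh"
proof (rule mono_onI)
  fix r s :: real assume rs: "r \<in> {0..1}" "s \<in> {0..1}" "r \<le> s"
  show "hh r \<le> hh s"
  proof (cases "r \<le> 0")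
    case True thus ?thesis using hh_nn[of s] by (simp add: hh_def)
  next
    case False thus ?thesis using h_mono[of r s] rs by (simp add: hh_def)
  qed
qed

lemma hh1: "hh 1 = 1" by (simp add: hh_def h1)

lemma kappa_le: "kappa \<le> 1"
proof -
  have "kappa \<le> (\<Sum>k\<in>{1..1}. hh (real k / real 1)) / real (1::nat)"
    unfolding kappa_def by (rule riemann(2)[OF hh_mono]) (use hh_nn in auto)
  thus ?thesis using hh1 by simp
qed

lemma kappa_pos: "kappa > 0"
proof -
  have "(\<Sum>k\<in>{1..<2}. hh (real k / real 2)) / real (2::nat) \<le> kappa"
    unfolding kappa_def by (rule riemann(1)[OF hh_mono]) (use hh_nn in auto)
  moreover have "{1..<2::nat} = {1}" by auto
  moreover have "hh (1/2) > 0" using h_pos by (simp add: hh_def)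
  ultimately show ?thesis by simp
qed

end

context asy begin

lemma ev_pos_ce:
  assumes tend: "((\<lambda>x. ce x / cb x) \<longlongrightarrow> a) F" and a: "a > 0"
  shows "\<forall>\<^sub>F z in F. z > 0 \<and> ce z > 0"
proof -
  have "\<forall>\<^sub>F z in F. ce z / cb z > 0" using order_tendstoD(1)[OF tend a] .
  with Fpos show ?thesis
  proof eventually_elim
    case (elim z) thus ?case using cbpos[of z] by (simp add: zero_less_divide_iff)
  qed
qed

lemma stretch01:
  fixes ce :: "real \<Rightarrow> real" and z :: real
  assumes z: "z > 0"
  shows "integral {0..z} ce = z * integral {0..1} (\<lambda>u. ce (z * u))"
proof -
  have img: "(\<lambda>x. x / z) ` {0..z} = {0..1}"
  proof
    show "(\<lambda>x. x / z) ` {0..z} \<subseteq> {0..1}" using z by auto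
    show "{0..1} \<subseteq> (\<lambda>x. x / z) ` {0..z}"
    proof
      fix u :: real assume "u \<in> {0..1}"
      hence "z * u \<in> {0..z}" "u = (z * u) / z" using z by (auto simp: mult_le_cancel_left1)
      thus "u \<in> (\<lambda>x. x / z) ` {0..z}" by blast
    qed
  qed
  have "integral ((\<lambda>x. x / z) ` {0..z}) (\<lambda>x. ce (z * x)) = (1 / \<bar>z\<bar>) *\<^sub>R integral {0..z} ce"
    by (rule integral_stretch_real) (use z in auto)
  thus ?thesis using z by (simp add: img)
qed

lemma phi_ratio:
  assumes mono: "mono_on {0..} ce" and nn: "\<And>x. 0 \<le> x \<Longrightarrow> 0 \<le> ce x" and a: "a > 0"
    and tend: "((\<lambda>x. ce x / cb x) \<longlongrightarrow> a) F"
  shows "((\<lambda>z. integral {0..z} ce / (z * ce z)) \<longlongrightarrow> kappa) F"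
proof -
  define G where "G = (\<lambda>z u. ce (z * u) / ce z)"
  have eqG: "integral {0..z} ce / (z * ce z) = integral {0..1} (G z)" if "z > 0" "ce z > 0" for z
    using stretch01[OF that(1), of ce] that by (simp add: G_def)
  have point: "((\<lambda>z. G z u) \<longlongrightarrow> hh u) F" if u: "u > 0" for u
  proof -
    have t: "((\<lambda>z. (ce (z * u) / cb z) / (ce z / cb z)) \<longlongrightarrow> (a * h u) / a) F"
      by (intro tendsto_divide scaled[OF tend u] tend) (use a in auto)
    have "\<forall>\<^sub>F z in F. (ce (z * u) / cb z) / (ce z / cb z) = G z u"
      using Fpos
    proof eventually_elim
      case (elim z) thus ?case using cbpos[OF elim] by (simp add: G_def)
    qed
    from Lim_transform_eventually[OF t this] show ?thesis using a u by (simp add: hh_def)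
  qed
  have Gmono: "mono_on {0..1} (G z)" if "z > 0" "ce z > 0" for z
  proof (rule mono_onI)
    fix r s :: real assume rs: "r \<in> {0..1}" "s \<in> {0..1}" "r \<le> s"
    have "ce (z * r) \<le> ce (z * s)" by (rule mono_onD[OF mono]) (use rs that in \<open>auto intro: mult_left_mono\<close>)
    thus "G z r \<le> G z s" using that by (simp add: G_def divide_right_mono)
  qed
  have Gnn: "0 \<le> G z u" if "z > 0" "ce z > 0" "0 \<le> u" for z u
    using nn[of "z * u"] that by (simp add: G_def)
  show ?thesis
    unfolding tendsto_iff
  proof (intro allI impI)
    fix \<epsilon> :: real assume eps: "\<epsilon> > 0"
    obtain N :: nat where N: "N > 2 / \<epsilon>" using reals_Archimedean2 by blast
    have Npos: "N > 0" using N eps by (metis divide_pos_pos gr0I of_nat_0 zero_less_numeral not_less_iff_gr_or_eq)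
    define Ls where "Ls = (\<lambda>g::real\<Rightarrow>real. (\<Sum>k\<in>{1..<N}. g (real k / real N)) / real N)"
    define Us where "Us = (\<lambda>g::real\<Rightarrow>real. (\<Sum>k\<in>{1..N}. g (real k / real N)) / real N)"
    have kpos: "real k / real N > 0" if "k \<ge> 1" for k using that Npos by auto
    have tL: "((\<lambda>z. Ls (G z)) \<longlongrightarrow> Ls hh) F"
      unfolding Ls_def by (intro tendsto_divide tendsto_const tendsto_sum point kpos) (use Npos in auto)
    have tU: "((\<lambda>z. Us (G z)) \<longlongrightarrow> Us hh) F"
      unfolding Us_def by (intro tendsto_divide tendsto_const tendsto_sum point kpos) (use Npos in auto)
    have UL: "Us hh - Ls hh = 1 / real N"
    proof -
      have "{1..N} = {1..<Suc N}" by auto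
      hence "(\<Sum>k\<in>{1..N}. hh (real k / real N)) = (\<Sum>k\<in>{1..<N}. hh (real k / real N)) + hh (real N / real N)"
        using Npos by (simp add: sum.atLeastLessThan_Suc)
      thus ?thesis using Npos hh1 by (simp add: Us_def Ls_def diff_divide_distrib[symmetric])
    qed
    have kL: "Ls hh \<le> kappa" unfolding Ls_def kappa_def by (rule riemann(1)[OF hh_mono hh_nn Npos])
    have kU: "kappa \<le> Us hh" unfolding Us_def kappa_def by (rule riemann(2)[OF hh_mono hh_nn Npos])
    have e1: "\<forall>\<^sub>F z in F. Ls (G z) > Ls hh - 1 / real N"
      by (rule order_tendstoD(1)[OF tL]) (use Npos in simp)
    have e2: "\<forall>\<^sub>F z in F. Us (G z) < Us hh + 1 / real N"
      by (rule order_tendstoD(2)[OF tU]) (use Npos in simp)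
    have Neps: "2 / real N < \<epsilon>" using N eps Npos by (simp add: field_simps)
    from e1 e2 ev_pos_ce[OF tend a]
    show "\<forall>\<^sub>F z in F. dist (integral {0..z} ce / (z * ce z)) kappa < \<epsilon>"
    proof eventually_elim
      case (elim z)
      have zz: "z > 0" "ce z > 0" using elim by auto
      have r1: "Ls (G z) \<le> integral {0..1} (G z)" unfolding Ls_def
        by (rule riemann(1)[OF Gmono[OF zz] Gnn[OF zz] Npos])
      have r2: "integral {0..1} (G z) \<le> Us (G z)" unfolding Us_def
        by (rule riemann(2)[OF Gmono[OF zz] Gnn[OF zz] Npos])
      have "\<bar>integral {0..1} (G z) - kappa\<bar> < 2 / real N"
        using r1 r2 kL kU UL elim by auto
      thus ?case using eqG[OF zz] Neps by (simp add: dist_real_def)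
    qed
  qed
qed

lemma int_props:
  fixes ce :: "real \<Rightarrow> real"
  assumes mono: "mono_on {0..} ce" and nn: "\<And>x. 0 \<le> x \<Longrightarrow> 0 \<le> ce x" and z: "0 \<le> z"
  shows "0 \<le> integral {0..z} ce" "integral {0..z} ce \<le> z * ce z"
proof -
  have int: "ce integrable_on {0..z}"
    by (rule integrable_on_mono_on, rule mono_on_subset[OF mono]) auto
  have "integral {0..z} (\<lambda>_. 0) \<le> integral {0..z} ce"
    by (rule integral_le) (use int nn in auto)
  thus "0 \<le> integral {0..z} ce" by simp
  have "integral {0..z} ce \<le> integral {0..z} (\<lambda>_. ce z)"
    by (rule integral_le) (use int mono z in \<open>auto intro: mono_onD\<close>)
  thus "integral {0..z} ce \<le> z * ce z" using z by (simp add: mult.commute)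
qed

lemma fin_edge:
  assumes tend: "((\<lambda>x. ce x / cb x) \<longlongrightarrow> a) F"
  shows "\<forall>\<^sub>F M in F. ce M \<le> (a + 1) * cb M"
  using order_tendstoD(2)[OF tend less_add_one[of a]] Fpos
  by eventually_elim (use cbpos in \<open>auto simp: divide_less_eq less_imp_le\<close>)

lemma zero_edge:
  assumes tend: "((\<lambda>x. ce x / cb x) \<longlongrightarrow> 0) F" and e: "\<epsilon> > 0"
  shows "\<forall>\<^sub>F M in F. ce M \<le> \<epsilon> * cb M"
  using order_tendstoD(2)[OF tend e] Fpos
  by eventually_elim (use cbpos in \<open>auto simp: divide_less_eq less_imp_le\<close>)

lemma UA:
  assumes mono: "mono_on {0..} ce" and nn: "\<And>x. 0 \<le> x \<Longrightarrow> 0 \<le> ce x" and a: "a > 0"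
    and tend: "((\<lambda>x. ce x / cb x) \<longlongrightarrow> a) F" and eps: "\<epsilon> > 0"
  shows "\<forall>\<^sub>F M in F. \<forall>z. 0 \<le> z \<and> z \<le> M \<longrightarrow> \<bar>integral {0..z} ce - kappa * z * ce z\<bar> \<le> \<epsilon> * M * cb M"
proof -
  define \<eta> where "\<eta> = min 1 (\<epsilon> / (4 * (a + 1)))"
  define \<epsilon>' where "\<epsilon>' = \<epsilon> / (2 * (a + 1))"
  have eta: "0 < \<eta>" "\<eta> \<le> 1" using eps a by (auto simp: \<eta>_def)
  have "\<eta> * (a + 1) \<le> \<epsilon> / (4 * (a + 1)) * (a + 1)"
    by (rule mult_right_mono) (use a in \<open>auto simp: \<eta>_def\<close>)
  moreover have "\<epsilon> / (4 * (a + 1)) * (a + 1) = \<epsilon> / 4" using a by (simp add: field_simps)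
  ultimately have eta3: "\<eta> * (a + 1) \<le> \<epsilon> / 4" by linarith
  have eps': "\<epsilon>' > 0" "\<epsilon>' * (a + 1) = \<epsilon> / 2" using eps a by (auto simp: \<epsilon>'_def field_simps)
  have "\<forall>\<^sub>F z in F. dist (integral {0..z} ce / (z * ce z)) kappa < \<epsilon>'"
    using phi_ratio[OF mono nn a tend] eps' unfolding tendsto_iff by auto
  with ev_pos_ce[OF tend a]
  have "\<forall>\<^sub>F z in F. z > 0 \<and> ce z > 0 \<and> \<bar>integral {0..z} ce / (z * ce z) - kappa\<bar> < \<epsilon>'"
    by eventually_elim (auto simp: dist_real_def)
  from Fint[OF this eta(1,2)] fin_edge[OF tend] Fpos
  show ?thesis
  proof eventually_elim
    case (elim M)
    show ?case
    proof (intro allI impI)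
      fix z assume z: "0 \<le> z \<and> z \<le> M"
      have cb: "cb M > 0" using cbpos elim by auto
      have cez: "ce z \<le> ce M" using z by (intro mono_onD[OF mono]) auto
      have ip: "0 \<le> integral {0..z} ce" "integral {0..z} ce \<le> z * ce z"
        using int_props[OF mono nn] z by auto
      have k: "0 \<le> kappa" "kappa \<le> 1" using kappa_pos kappa_le by auto
      have zc: "z * ce z \<le> M * ce M" using z cez nn[of z] by (intro mult_mono) auto
      have Mc: "M * ce M \<le> M * ((a + 1) * cb M)" using elim by (intro mult_left_mono) auto
      show "\<bar>integral {0..z} ce - kappa * z * ce z\<bar> \<le> \<epsilon> * M * cb M"
      proof (cases "\<eta> * M \<le> z")
        case True
        hence zp: "z > 0" "ce z > 0" and r: "\<bar>integral {0..z} ce / (z * ce z) - kappa\<bar> < \<epsilon>'"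
          using elim z by auto
        have "integral {0..z} ce - kappa * z * ce z = (z * ce z) * (integral {0..z} ce / (z * ce z) - kappa)"
          using zp by (simp add: field_simps)
        hence "\<bar>integral {0..z} ce - kappa * z * ce z\<bar> = (z * ce z) * \<bar>integral {0..z} ce / (z * ce z) - kappa\<bar>"
          using zp by (simp add: abs_mult)
        also have "\<dots> \<le> (z * ce z) * \<epsilon>'" using r zp by (intro mult_left_mono) auto
        also have "\<dots> \<le> (M * ((a + 1) * cb M)) * \<epsilon>'" using zc Mc eps' by (intro mult_right_mono) auto
        also have "\<dots> = (\<epsilon>' * (a + 1)) * M * cb M" by (simp add: algebra_simps)
        also have "\<dots> \<le> \<epsilon> * M * cb M" using eps' elim cb eps by (simp add: mult_right_mono)
        finally show ?thesis .
      next
        case False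
        have zc0: "0 \<le> z * ce z" using z nn[of z] by auto
        have "\<bar>integral {0..z} ce - kappa * z * ce z\<bar> \<le> z * ce z"
        proof -
          have "kappa * z * ce z \<le> z * ce z" using k zc0 by (simp add: mult.assoc mult_left_le_one_le)
          moreover have "0 \<le> kappa * z * ce z" using k zc0 by (simp add: mult.assoc)
          ultimately show ?thesis using ip by linarith
        qed
        also have "z * ce z \<le> (\<eta> * M) * ce M" using False cez nn[of z] z by (intro mult_mono) auto
        also have "\<dots> \<le> (\<eta> * M) * ((a + 1) * cb M)" using elim eta by (intro mult_left_mono) auto
        also have "\<dots> = (\<eta> * (a + 1)) * M * cb M" by (simp add: algebra_simps)
        also have "\<dots> \<le> (\<epsilon> / 4) * M * cb M" using eta3 elim cb by (intro mult_right_mono) auto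
        also have "\<dots> \<le> \<epsilon> * M * cb M" using eps elim cb by (intro mult_right_mono) auto
        finally show ?thesis .
      qed
    qed
  qed
qed

lemma inf_edge:
  assumes inf: "\<And>r. \<forall>\<^sub>F x in F. ce x / cb x > r" and eta: "\<eta> > 0"
  shows "\<forall>\<^sub>F M in F. ce (M * \<eta>) > K * cb M"
proof -
  define r where "r = 2 * (\<bar>K\<bar> + 1) / h \<eta>"
  have hp: "h \<eta> > 0" using h_pos[OF eta] .
  have e1: "\<forall>\<^sub>F M in F. ce (M * \<eta>) / cb (M * \<eta>) > r" by (rule ev_comp[OF inf eta])
  have e2: "\<forall>\<^sub>F M in F. cb (M * \<eta>) / cb M > h \<eta> / 2"
    by (rule order_tendstoD(1)[OF h_tend[OF eta]]) (use hp in simp)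
  from e1 e2 Fpos show ?thesis
  proof eventually_elim
    case (elim M)
    have c1: "cb M > 0" "cb (M * \<eta>) > 0" using cbpos elim eta by auto
    have rpos: "r > 0" using hp by (simp add: r_def)
    have "ce (M * \<eta>) = (ce (M * \<eta>) / cb (M * \<eta>)) * (cb (M * \<eta>) / cb M) * cb M"
      using c1 by simp
    also have "\<dots> > r * (h \<eta> / 2) * cb M"
      using elim c1 rpos hp by (intro mult_strict_right_mono mult_strict_mono) auto
    also have "r * (h \<eta> / 2) = \<bar>K\<bar> + 1" using hp by (simp add: r_def)
    finally have "ce (M * \<eta>) > (\<bar>K\<bar> + 1) * cb M" .
    moreover have "K * cb M \<le> (\<bar>K\<bar> + 1) * cb M" using c1 by (intro mult_right_mono) auto
    ultimately show ?case by linarith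
  qed
qed

lemma low_edge:
  assumes tend: "((\<lambda>x. ce x / cb x) \<longlongrightarrow> a) F" and a: "a > 0" and b: "\<beta> > 0"
  shows "\<forall>\<^sub>F M in F. ce (M * \<beta>) \<ge> (a * h \<beta> / 2) * cb M"
proof -
  have hp: "h \<beta> > 0" using h_pos[OF b] .
  have "\<forall>\<^sub>F M in F. ce (M * \<beta>) / cb M > a * h \<beta> / 2"
    by (rule order_tendstoD(1)[OF scaled[OF tend b]]) (use a hp in simp)
  with Fpos show ?thesis
    by eventually_elim (use cbpos in \<open>auto simp: less_divide_eq less_imp_le\<close>)
qed

end

context rnet begin

lemma reroute:
  fixes bad :: "'p \<Rightarrow> bool" and qs :: "'i \<Rightarrow> 'p" and g :: "'p \<Rightarrow> real"
  assumes g: "feas m g" and qs: "\<And>i. i \<in> I \<Longrightarrow> qs i \<in> P \<and> od (qs i) = i"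
  defines "Rv \<equiv> (\<lambda>i. \<Sum>q\<in>{q\<in>P. od q = i \<and> bad q}. g q)"
  defines "g' \<equiv> (\<lambda>p. (if bad p then 0 else g p) + (\<Sum>i\<in>I. if p = qs i then Rv i else 0))"
  shows "feas m g'"
    and "\<And>e. ld g' e \<le> ld g e + (\<Sum>q\<in>{q\<in>P. bad q}. g q)"
    and "\<And>e. (\<forall>i\<in>I. e \<notin> set (pe (qs i))) \<Longrightarrow> ld g' e \<le> ld g e"
    and "\<And>e. (\<forall>i\<in>I. e \<notin> set (pe (qs i))) \<Longrightarrow> ld g' e > 0 \<Longrightarrow> \<exists>p\<in>P. e \<in> set (pe p) \<and> \<not> bad p"
proof -
  have gnn: "\<And>p. p \<in> P \<Longrightarrow> 0 \<le> g p" using g by (simp add: feasible_flow_def)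
  have Rvnn: "0 \<le> Rv i" for i unfolding Rv_def using gnn by (auto intro: sum_nonneg)
  have fin: "finite {q\<in>P. Q q}" for Q using fP by auto
  have Rv_alt: "Rv i = (\<Sum>q\<in>{q\<in>P. od q = i}. if bad q then g q else 0)" for i
  proof -
    have "{q\<in>P. od q = i \<and> bad q} = {q\<in>{q\<in>P. od q = i}. bad q}" by auto
    thus ?thesis unfolding Rv_def using sum.inter_filter[OF fin[of "\<lambda>q. od q = i"], of g bad] by simp
  qed
  have RvI: "(\<Sum>i\<in>I. Rv i) = (\<Sum>q\<in>{q\<in>P. bad q}. g q)"
  proof -
    have "(\<Sum>i\<in>I. Rv i) = (\<Sum>i\<in>I. \<Sum>q\<in>{q\<in>P. od q = i}. if bad q then g q else 0)"
      using Rv_alt by simp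
    also have "\<dots> = (\<Sum>q\<in>P. if bad q then g q else 0)" by (rule sum_by_od)
    also have "\<dots> = (\<Sum>q\<in>{q\<in>P. bad q}. g q)" by (simp add: sum.inter_filter[OF fP])
    finally show ?thesis .
  qed
  show "feas m g'"
    unfolding feasible_flow_def
  proof safe
    fix p assume "p \<in> P"
    thus "0 \<le> g' p" unfolding g'_def using gnn Rvnn by (auto intro!: sum_nonneg add_nonneg_nonneg)
  next
    fix j assume j: "j \<in> I"
    let ?Q = "{q\<in>P. od q = j}"
    have s1: "(\<Sum>p\<in>?Q. if bad p then 0 else g p) = m j - Rv j"
    proof -
      have "(\<Sum>p\<in>?Q. g p) = (\<Sum>p\<in>?Q. if bad p then 0 else g p) + (\<Sum>p\<in>?Q. if bad p then g p else 0)"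
        by (subst sum.distrib[symmetric]) (auto intro: sum.cong)
      moreover have "(\<Sum>p\<in>?Q. if bad p then g p else 0) = Rv j"
        using Rv_alt by simp
      moreover have "(\<Sum>p\<in>?Q. g p) = m j" using g j by (simp add: feasible_flow_def)
      ultimately show ?thesis by simp
    qed
    have s2: "(\<Sum>p\<in>?Q. \<Sum>i\<in>I. if p = qs i then Rv i else 0) = Rv j"
    proof -
      have "(\<Sum>p\<in>?Q. \<Sum>i\<in>I. if p = qs i then Rv i else 0) = (\<Sum>i\<in>I. \<Sum>p\<in>?Q. if p = qs i then Rv i else 0)"
        by (rule sum.swap)
      also have "\<dots> = (\<Sum>i\<in>I. if i = j then Rv i else 0)"
      proof (rule sum.cong[OF refl])
        fix i assume i: "i \<in> I"
        have "(\<Sum>p\<in>?Q. if p = qs i then Rv i else 0) = (if qs i \<in> ?Q then Rv i else 0)"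
          by (simp add: sum.delta[OF fin])
        also have "\<dots> = (if i = j then Rv i else 0)" using qs[OF i] by auto
        finally show "(\<Sum>p\<in>?Q. if p = qs i then Rv i else 0) = (if i = j then Rv i else 0)" .
      qed
      also have "\<dots> = Rv j" using j fI by (simp add: sum.delta)
      finally show ?thesis .
    qed
    show "(\<Sum>p\<in>?Q. g' p) = m j" unfolding g'_def sum.distrib s1 s2 by simp
  qed
  fix e
  let ?Pe = "{p\<in>P. e \<in> set (pe p)}"
  have finPe: "finite ?Pe" using fP by auto
  have "ld g' e = (\<Sum>p\<in>?Pe. if bad p then 0 else g p) + (\<Sum>i\<in>I. \<Sum>p\<in>?Pe. if p = qs i then Rv i else 0)"
    unfolding load_def g'_def sum.distrib by (simp add: sum.swap[of _ ?Pe])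
  also have "\<dots> = (\<Sum>p\<in>?Pe. if bad p then 0 else g p) + (\<Sum>i\<in>I. if qs i \<in> ?Pe then Rv i else 0)"
    by (simp add: sum.delta[OF finPe])
  finally have ldg': "ld g' e = (\<Sum>p\<in>?Pe. if bad p then 0 else g p) + (\<Sum>i\<in>I. if qs i \<in> ?Pe then Rv i else 0)" .
  have a1: "(\<Sum>p\<in>?Pe. if bad p then 0 else g p) \<le> ld g e"
    unfolding load_def by (rule sum_mono) (use gnn in auto)
  have a2: "(\<Sum>i\<in>I. if qs i \<in> ?Pe then Rv i else 0) \<le> (\<Sum>i\<in>I. Rv i)"
    by (rule sum_mono) (use Rvnn in auto)
  show "ld g' e \<le> ld g e + (\<Sum>q\<in>{q\<in>P. bad q}. g q)" using ldg' a1 a2 RvI by simp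
  assume noq: "\<forall>i\<in>I. e \<notin> set (pe (qs i))"
  have a3: "(\<Sum>i\<in>I. if qs i \<in> ?Pe then Rv i else 0) = 0" using noq by (intro sum.neutral) auto
  show "ld g' e \<le> ld g e" using ldg' a1 a3 by simp
  assume pos: "ld g' e > 0"
  hence "(\<Sum>p\<in>?Pe. if bad p then 0 else g p) > 0" using ldg' a3 by simp
  have "\<exists>p\<in>?Pe. (if bad p then 0 else g p) \<noteq> 0"
  proof (rule ccontr)
    assume "\<not> (\<exists>p\<in>?Pe. (if bad p then 0 else g p) \<noteq> 0)"
    hence "(\<Sum>p\<in>?Pe. if bad p then 0 else g p) = 0" by (intro sum.neutral) blast
    thus False using \<open>(\<Sum>p\<in>?Pe. if bad p then 0 else g p) > 0\<close> by simp
  qed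
  then obtain p where "p \<in> ?Pe" "(if bad p then 0 else g p) \<noteq> 0" by blast
  thus "\<exists>p\<in>P. e \<in> set (pe p) \<and> \<not> bad p" by (auto split: if_splits)
qed

lemma bad_mass:
  fixes g :: "'p \<Rightarrow> real" and LC :: real
  assumes g: "feas m g" and Lp: "LC > 0"
  defines "bad \<equiv> (\<lambda>q. \<exists>e\<in>set (pe q). c e (ld g e) > LC)"
  shows "(\<Sum>q\<in>{q\<in>P. bad q}. g q) * LC \<le> SC g"
proof -
  let ?B = "{e\<in>E. c e (ld g e) > LC}"
  have gnn: "\<And>p. p \<in> P \<Longrightarrow> 0 \<le> g p" using g by (simp add: feasible_flow_def)
  have finB: "finite ?B" using fE by auto
  have "(\<Sum>q\<in>{q\<in>P. bad q}. g q) \<le> (\<Sum>q\<in>P. \<Sum>e\<in>?B. if e \<in> set (pe q) then g q else 0)"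
  proof -
    have "(\<Sum>q\<in>{q\<in>P. bad q}. g q) = (\<Sum>q\<in>P. if bad q then g q else 0)"
      by (simp add: sum.inter_filter[OF fP])
    also have "\<dots> \<le> (\<Sum>q\<in>P. \<Sum>e\<in>?B. if e \<in> set (pe q) then g q else 0)"
    proof (rule sum_mono)
      fix q assume q: "q \<in> P"
      show "(if bad q then g q else 0) \<le> (\<Sum>e\<in>?B. if e \<in> set (pe q) then g q else 0)"
      proof (cases "bad q")
        case True
        then obtain e where e: "e \<in> set (pe q)" "c e (ld g e) > LC" unfolding bad_def by auto
        hence eB: "e \<in> ?B" using peE[OF q] by auto
        have "g q = (if e \<in> set (pe q) then g q else 0)" using e by simp
        also have "\<dots> \<le> (\<Sum>e\<in>?B. if e \<in> set (pe q) then g q else 0)"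
          by (rule member_le_sum[OF eB _ finB]) (use gnn q in auto)
        finally show ?thesis using True by simp
      next
        case False thus ?thesis using gnn q by (auto intro: sum_nonneg)
      qed
    qed
    finally show ?thesis .
  qed
  also have "\<dots> = (\<Sum>e\<in>?B. ld g e)"
    by (subst sum.swap) (simp add: load_def sum.inter_filter[OF fP])
  finally have R: "(\<Sum>q\<in>{q\<in>P. bad q}. g q) \<le> (\<Sum>e\<in>?B. ld g e)" .
  have "(\<Sum>e\<in>?B. ld g e) * LC \<le> (\<Sum>e\<in>?B. ld g e * c e (ld g e))"
    unfolding sum_distrib_right by (rule sum_mono) (use ld_nonneg[OF g] in \<open>auto intro: mult_left_mono\<close>)
  also have "\<dots> \<le> SC g" unfolding social_cost_def
    by (rule sum_mono2[OF fE]) (use ld_nonneg[OF g] cnonneg in auto)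
  finally show ?thesis using R Lp by (meson mult_right_mono less_imp_le order_trans)
qed

end

locale mainloc = rnet E I P od pe c + asy F cb
  for E :: "'e set" and I :: "'i set" and P :: "'p set" and od pe c F cb +
  assumes blim: "\<And>e. e \<in> E \<Longrightarrow> \<exists>\<alpha>::ereal. \<alpha> \<ge> 0 \<and> ((\<lambda>x. ereal (c e x / cb x)) \<longlongrightarrow> \<alpha>) F"
    and tight: "\<And>i. i \<in> I \<Longrightarrow>
      0 < (INF p\<in>{p\<in>P. od p = i}. SUP e\<in>set (pe p). Lim F (\<lambda>x. ereal (c e x / cb x))) \<and>
      (INF p\<in>{p\<in>P. od p = i}. SUP e\<in>set (pe p). Lim F (\<lambda>x. ereal (c e x / cb x))) < \<infinity>"
begin

definition al where "al e = Lim F (\<lambda>x. ereal (c e x / cb x))"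
definition ar where "ar e = real_of_ereal (al e)"
definition FIN where "FIN = {e\<in>E. al e \<noteq> \<infinity>}"
definition NN where "NN = {e\<in>E. al e = \<infinity>}"
definition Kc where "Kc = (\<Sum>e\<in>FIN. ar e + 1)"
definition qs where "qs i = (SOME p. p \<in> P \<and> od p = i \<and> (\<forall>e\<in>set (pe p). al e \<noteq> \<infinity>))"

lemma al_tend: "e \<in> E \<Longrightarrow> ((\<lambda>x. ereal (c e x / cb x)) \<longlongrightarrow> al e) F \<and> al e \<ge> 0"
proof -
  assume e: "e \<in> E"
  obtain \<alpha> :: ereal where a: "\<alpha> \<ge> 0" "((\<lambda>x. ereal (c e x / cb x)) \<longlongrightarrow> \<alpha>) F" using blim[OF e] by auto
  have "al e = \<alpha>" unfolding al_def by (rule tendsto_Lim) (use Fnb a in auto)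
  thus ?thesis using a by simp
qed

lemma fin_lim: "e \<in> FIN \<Longrightarrow> ((\<lambda>x. c e x / cb x) \<longlongrightarrow> ar e) F \<and> ar e \<ge> 0 \<and> al e = ereal (ar e)"
proof -
  assume e: "e \<in> FIN"
  hence eE: "e \<in> E" and ni: "al e \<noteq> \<infinity>" by (auto simp: FIN_def)
  have t: "((\<lambda>x. ereal (c e x / cb x)) \<longlongrightarrow> al e) F" and nn: "al e \<ge> 0" using al_tend[OF eE] by auto
  have eq: "al e = ereal (ar e)" using ni nn unfolding ar_def by (cases "al e") auto
  have "((\<lambda>x. ereal (c e x / cb x)) \<longlongrightarrow> ereal (ar e)) F" using t eq by simp
  hence "((\<lambda>x. c e x / cb x) \<longlongrightarrow> ar e) F" by (simp only: lim_ereal)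
  moreover have "0 \<le> ar e" using nn eq by simp
  ultimately show ?thesis using eq by simp
qed

lemma inf_lim: "e \<in> NN \<Longrightarrow> \<forall>\<^sub>F x in F. c e x / cb x > r"
proof -
  assume e: "e \<in> NN"
  hence "((\<lambda>x. ereal (c e x / cb x)) \<longlongrightarrow> \<infinity>) F" using al_tend[of e] by (auto simp: NN_def)
  hence "\<forall>\<^sub>F x in F. ereal r < ereal (c e x / cb x)" by (simp add: tendsto_PInfty)
  thus ?thesis by simp
qed

lemma tight_path: "i \<in> I \<Longrightarrow> \<exists>p. p \<in> P \<and> od p = i \<and> (\<forall>e\<in>set (pe p). al e \<noteq> \<infinity>)"
proof -
  assume i: "i \<in> I"
  have "(INF p\<in>{p\<in>P. od p = i}. SUP e\<in>set (pe p). al e) < \<infinity>" using tight[OF i] by (simp add: al_def)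
  hence "\<exists>p\<in>{p\<in>P. od p = i}. (SUP e\<in>set (pe p). al e) < \<infinity>" by (simp only: INF_less_iff)
  then obtain p where p: "p \<in> {p\<in>P. od p = i}" "(SUP e\<in>set (pe p). al e) < \<infinity>" by blast
  have "al e \<noteq> \<infinity>" if "e \<in> set (pe p)" for e
  proof -
    have "al e \<le> (SUP e\<in>set (pe p). al e)" using that by (rule SUP_upper)
    thus ?thesis using p(2) by auto
  qed
  thus ?thesis using p by auto
qed

lemma qs: "i \<in> I \<Longrightarrow> qs i \<in> P \<and> od (qs i) = i \<and> (\<forall>e\<in>set (pe (qs i)). al e \<noteq> \<infinity>)"
  unfolding qs_def by (rule someI_ex, rule tight_path)

lemma qs_FIN: "i \<in> I \<Longrightarrow> e \<in> set (pe (qs i)) \<Longrightarrow> e \<in> FIN"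
  using qs[of i] peE[of "qs i"] by (auto simp: FIN_def)

lemma pos_edge: "p \<in> P \<Longrightarrow> \<exists>e\<in>set (pe p). al e > 0"
proof -
  assume p: "p \<in> P"
  hence i: "od p \<in> I" using odP by auto
  have "0 < (INF q\<in>{q\<in>P. od q = od p}. SUP e\<in>set (pe q). al e)" using tight[OF i] by (simp add: al_def)
  also have "\<dots> \<le> (SUP e\<in>set (pe p). al e)" by (rule INF_lower) (use p in auto)
  finally have "0 < (SUP e\<in>set (pe p). al e)" .
  thus ?thesis by (simp only: less_SUP_iff)
qed

lemma E_split: "e \<in> E \<Longrightarrow> e \<in> FIN \<or> e \<in> NN" by (auto simp: FIN_def NN_def)

lemma ar_nn: "e \<in> FIN \<Longrightarrow> 0 \<le> ar e" using fin_lim by auto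

lemma Kc_ge: "e \<in> FIN \<Longrightarrow> ar e + 1 \<le> Kc"
  unfolding Kc_def by (rule member_le_sum) (use ar_nn fE in \<open>auto simp: FIN_def\<close>)

lemma Kc_nn: "0 \<le> Kc" unfolding Kc_def using ar_nn by (auto intro: sum_nonneg add_nonneg_nonneg)

end

context mainloc begin

lemma Phi0: "Phi e 0 = 0" by (simp add: Phi_def)

lemma core:
  fixes M C L \<eta>1 \<eta>2 \<eta>3 :: real and m :: "'i \<Rightarrow> real" and f g :: "'p \<Rightarrow> real"
  assumes MC: "M > 0" "C > 0"
    and bF: "\<forall>e\<in>FIN. c e M \<le> (ar e + 1) * C"
    and cT: "\<forall>e\<in>FIN. ar e > 0 \<longrightarrow> (\<forall>z. 0 \<le> z \<and> z \<le> M \<longrightarrow> \<bar>Phi e z - kappa * z * c e z\<bar> \<le> \<eta>1 * M * C)"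
    and dZ: "\<forall>e\<in>FIN. ar e = 0 \<longrightarrow> c e M \<le> \<eta>1 * C"
    and eN: "\<forall>e\<in>NN. c e (M * \<eta>2) > Kc * C"
    and fN: "\<forall>e\<in>NN. c e (M * \<eta>3) > L * C"
    and par: "0 \<le> \<eta>1" "0 \<le> \<eta>2" "0 \<le> \<eta>3" "0 < L"
    and m: "\<And>i. i \<in> I \<Longrightarrow> 0 \<le> m i" "(\<Sum>i\<in>I. m i) = M"
    and f: "wardrop_eq I P od pe c m f" and g: "feas m g"
  shows "SC f \<le> SC g + real (card E) * ((\<eta>1 * (M * C) + Kc * Kc * (M * C) / L + \<eta>3 * L * (M * C)) / kappa
            + \<eta>1 * (M * C) / kappa + \<eta>1 * (M * C) + \<eta>2 * Kc * (M * C))"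
proof -
  define A where "A = M * C"
  have A: "A > 0" using MC by (simp add: A_def)
  have ff: "feas m f" using f by (simp add: wardrop_eq_def)
  have k: "0 < kappa" "kappa \<le> 1" using kappa_pos kappa_le by auto
  have Kc: "0 \<le> Kc" by (rule Kc_nn)
  have ldM: "0 \<le> ld h e \<and> ld h e \<le> M" if "feas m h" for h e
    using ld_nonneg[OF that] ld_le[OF that] m by auto
  have cM: "c e z \<le> c e M" if "e \<in> E" "0 \<le> z" "z \<le> M" for e z using cmono'[OF that] .
  have eE_FIN: "e \<in> E" if "e \<in> FIN" for e using that by (auto simp: FIN_def)
  have eE_NN: "e \<in> E" if "e \<in> NN" for e using that by (auto simp: NN_def)
  have cKc: "c e M \<le> Kc * C" if "e \<in> FIN" for e
  proof -
    have "c e M \<le> (ar e + 1) * C" using bF that by auto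
    also have "\<dots> \<le> Kc * C" using Kc_ge[OF that] MC by (intro mult_right_mono) auto
    finally show ?thesis .
  qed
  have pcq: "pc f (qs i) \<le> Kc * C" if i: "i \<in> I" for i
  proof -
    have sub: "set (pe (qs i)) \<subseteq> FIN" using qs_FIN[OF i] by auto
    have "pc f (qs i) \<le> (\<Sum>e\<in>set (pe (qs i)). (ar e + 1) * C)"
      unfolding path_cost_def
    proof (rule sum_mono)
      fix e assume e: "e \<in> set (pe (qs i))"
      hence eF: "e \<in> FIN" using sub by auto
      have "c e (ld f e) \<le> c e M" using cM[OF eE_FIN[OF eF]] ldM[OF ff] by auto
      thus "c e (ld f e) \<le> (ar e + 1) * C" using bF eF by auto
    qed
    also have "\<dots> \<le> (\<Sum>e\<in>FIN. (ar e + 1) * C)"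
      by (rule sum_mono2) (use sub fE ar_nn MC in \<open>auto simp: FIN_def\<close>)
    also have "\<dots> = Kc * C" by (simp add: Kc_def sum_distrib_right)
    finally show ?thesis .
  qed
  have pcu: "pc f p \<le> Kc * C" if p: "p \<in> P" "f p > 0" for p
  proof -
    have i: "od p \<in> I" using odP p by auto
    have "pc f p \<le> pc f (qs (od p))" using f p qs[OF i] unfolding wardrop_eq_def by auto
    thus ?thesis using pcq[OF i] by simp
  qed
  have fnn: "\<And>p. p \<in> P \<Longrightarrow> 0 \<le> f p" using ff by (simp add: feasible_flow_def)
  have SCf: "SC f \<le> Kc * A"
  proof -
    have "SC f = (\<Sum>p\<in>P. f p * pc f p)" by (rule SC_paths)
    also have "\<dots> \<le> (\<Sum>p\<in>P. f p * (Kc * C))"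
    proof (rule sum_mono)
      fix p assume p: "p \<in> P"
      show "f p * pc f p \<le> f p * (Kc * C)"
      proof (cases "f p > 0")
        case True thus ?thesis using pcu[OF p True] by simp
      next
        case False hence "f p = 0" using fnn[OF p] by simp
        thus ?thesis by simp
      qed
    qed
    also have "\<dots> = M * (Kc * C)" using feas_sum[OF ff] m by (simp add: sum_distrib_right[symmetric])
    finally show ?thesis by (simp add: A_def mult.left_commute)
  qed
  define Err1 where "Err1 = \<eta>1 * A / kappa + \<eta>1 * A + \<eta>2 * Kc * A"
  have Err1nn: "0 \<le> \<eta>1 * A / kappa" "0 \<le> \<eta>1 * A" "0 \<le> \<eta>2 * Kc * A" using par A k Kc by auto
  have eqedge: "ld f e * c e (ld f e) \<le> Phi e (ld f e) / kappa + Err1" if e: "e \<in> E" for e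
  proof -
    define x where "x = ld f e"
    have x: "0 \<le> x" "x \<le> M" using ldM[OF ff] by (auto simp: x_def)
    have Phinn: "0 \<le> Phi e x / kappa" using Phi_nonneg[OF e x(1)] k by simp
    have xc: "0 \<le> x * c e x" using x cnonneg[OF e x(1)] by simp
    consider "e \<in> FIN" "ar e > 0" | "e \<in> FIN" "ar e = 0" | "e \<in> NN"
      using E_split[OF e] ar_nn by force
    hence "x * c e x \<le> Phi e x / kappa + Err1"
    proof cases
      case 1
      have "\<bar>Phi e x - kappa * x * c e x\<bar> \<le> \<eta>1 * A" using cT 1 x by (auto simp: A_def mult.assoc)
      hence "kappa * (x * c e x) \<le> Phi e x + \<eta>1 * A" by (simp add: mult.assoc)
      hence "x * c e x \<le> (Phi e x + \<eta>1 * A) / kappa" using k by (simp add: pos_le_divide_eq mult.commute)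
      thus ?thesis using Err1nn by (simp add: Err1_def add_divide_distrib)
    next
      case 2
      have "x * c e x \<le> M * c e M" using x cM[OF e x] cnonneg[OF e x(1)] by (intro mult_mono) auto
      also have "\<dots> \<le> M * (\<eta>1 * C)" using dZ 2 MC by (intro mult_left_mono) auto
      finally show ?thesis using Phinn Err1nn by (simp add: Err1_def A_def algebra_simps)
    next
      case 3
      have "x * c e x \<le> \<eta>2 * Kc * A"
      proof (cases "x > 0")
        case False thus ?thesis using x Err1nn by simp
      next
        case True
        have "(\<Sum>p\<in>{p\<in>P. e \<in> set (pe p)}. f p) > 0" using True by (simp add: x_def load_def)
        then obtain p where p: "p \<in> P" "e \<in> set (pe p)" "f p > 0"
        proof -
          assume *: "\<And>p. p \<in> P \<Longrightarrow> e \<in> set (pe p) \<Longrightarrow> 0 < f p \<Longrightarrow> thesis"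
          show "(\<Sum>p\<in>{p\<in>P. e \<in> set (pe p)}. f p) > 0 \<Longrightarrow> thesis"
          proof (rule ccontr)
            assume pos: "(\<Sum>p\<in>{p\<in>P. e \<in> set (pe p)}. f p) > 0" and nt: "\<not> thesis"
            have "(\<Sum>p\<in>{p\<in>P. e \<in> set (pe p)}. f p) \<le> 0"
              by (rule sum_nonpos) (use * nt fnn in force)
            thus False using pos by simp
          qed
        qed
        have cx: "c e x \<le> Kc * C" using edge_le_pc[OF p(1) ff p(2)] pcu[OF p(1) p(3)] by (simp add: x_def)
        have xl: "x < M * \<eta>2"
        proof (rule ccontr)
          assume "\<not> x < M * \<eta>2"
          hence "c e (M * \<eta>2) \<le> c e x" using par MC by (intro cmono'[OF e]) auto
          thus False using eN 3 cx by fastforce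
        qed
        have "x * c e x \<le> (M * \<eta>2) * (Kc * C)"
          using xl cx x cnonneg[OF e x(1)] by (intro mult_mono) auto
        thus ?thesis by (simp add: A_def algebra_simps)
      qed
      thus ?thesis using Phinn Err1nn by (simp add: Err1_def)
    qed
    thus ?thesis by (simp add: x_def)
  qed
  have SC1: "SC f \<le> Pot f / kappa + real (card E) * Err1"
  proof -
    have "SC f \<le> (\<Sum>e\<in>E. Phi e (ld f e) / kappa + Err1)"
      unfolding social_cost_def by (rule sum_mono) (rule eqedge)
    also have "\<dots> = Pot f / kappa + real (card E) * Err1"
      by (simp add: Pot_def sum.distrib sum_divide_distrib)
    finally show ?thesis .
  qed
  define LC where "LC = L * C"
  have LC: "LC > 0" using par MC by (simp add: LC_def)
  define bad where "bad = (\<lambda>q. \<exists>e\<in>set (pe q). c e (ld g e) > LC)"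
  define R where "R = (\<Sum>q\<in>{q\<in>P. bad q}. g q)"
  define Rv where "Rv = (\<lambda>i. \<Sum>q\<in>{q\<in>P. od q = i \<and> bad q}. g q)"
  define g' where "g' = (\<lambda>p. (if bad p then 0 else g p) + (\<Sum>i\<in>I. if p = qs i then Rv i else 0))"
  have qs': "\<And>i. i \<in> I \<Longrightarrow> qs i \<in> P \<and> od (qs i) = i" using qs by auto
  have g'f: "feas m g'" using reroute(1)[OF g qs', where bad=bad] unfolding g'_def Rv_def by blast
  have ld1: "ld g' e \<le> ld g e + R" for e
    using reroute(2)[OF g qs', where bad=bad] unfolding g'_def Rv_def R_def by blast
  have rr3: "\<And>e. \<forall>i\<in>I. e \<notin> set (pe (qs i)) \<Longrightarrow> ld g' e \<le> ld g e"
    using reroute(3)[OF g qs', where bad=bad] unfolding g'_def Rv_def by blast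
  have rr4: "\<And>e. \<forall>i\<in>I. e \<notin> set (pe (qs i)) \<Longrightarrow> ld g' e > 0 \<Longrightarrow> \<exists>p\<in>P. e \<in> set (pe p) \<and> \<not> bad p"
    using reroute(4)[OF g qs', where bad=bad] unfolding g'_def Rv_def by blast
  have Rnn: "0 \<le> R" unfolding R_def using g by (auto intro!: sum_nonneg simp: feasible_flow_def)
  have RLC: "R * LC \<le> SC g" unfolding R_def bad_def by (rule bad_mass[OF g LC])
  have Pot1: "Pot f \<le> Pot g'" by (rule Pot_eq_le[OF f g'f])
  define Err2 where "Err2 = \<eta>1 * A + R * Kc * C + \<eta>3 * L * A"
  have Err2nn: "0 \<le> \<eta>1 * A" "0 \<le> R * Kc * C" "0 \<le> \<eta>3 * L * A" using par A Rnn Kc MC by auto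
  have gedge: "Phi e (ld g' e) \<le> kappa * (ld g e * c e (ld g e)) + Err2" if e: "e \<in> E" for e
  proof -
    define y where "y = ld g e"
    define y' where "y' = ld g' e"
    have y: "0 \<le> y" "y \<le> M" using ldM[OF g] by (auto simp: y_def)
    have y': "0 \<le> y'" "y' \<le> M" using ldM[OF g'f] by (auto simp: y'_def)
    have yc: "0 \<le> kappa * (y * c e y)" using y cnonneg[OF e y(1)] k by simp
    show ?thesis
    proof (cases "e \<in> FIN")
      case True
      note eF = this
      have step1: "Phi e y' \<le> Phi e y + R * Kc * C"
      proof (cases "y' \<le> y")
        case True
        hence "Phi e y' \<le> Phi e y" using Phi_mono[OF e y'(1)] by simp
        thus ?thesis using Err2nn by simp
      next
        case False
        have "Phi e y' - Phi e y \<le> c e y' * (y' - y)" using Phi_up[OF e y(1)] False by simp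
        also have "\<dots> \<le> (Kc * C) * R"
        proof (rule mult_mono)
          show "c e y' \<le> Kc * C" using cM[OF e y'] cKc[OF eF] by simp
          show "y' - y \<le> R" using ld1[of e] by (simp add: y_def y'_def)
        qed (use Kc MC False in auto)
        finally show ?thesis by (simp add: algebra_simps)
      qed
      have step2: "Phi e y \<le> kappa * (y * c e y) + \<eta>1 * A"
      proof (cases "ar e > 0")
        case True
        have "\<bar>Phi e y - kappa * y * c e y\<bar> \<le> \<eta>1 * A" using cT eF True y by (auto simp: A_def mult.assoc)
        thus ?thesis by (simp add: mult.assoc)
      next
        case False
        hence a0: "ar e = 0" using ar_nn[OF eF] by simp
        have "Phi e y \<le> y * c e y" by (rule Phi_le[OF e y(1)])
        also have "\<dots> \<le> M * c e M" using y cM[OF e y] cnonneg[OF e y(1)] by (intro mult_mono) auto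
        also have "\<dots> \<le> M * (\<eta>1 * C)" using dZ eF a0 MC by (intro mult_left_mono) auto
        finally show ?thesis using yc by (simp add: A_def algebra_simps)
      qed
      show ?thesis using step1 step2 Err2nn by (simp add: Err2_def y_def y'_def)
    next
      case False
      hence eN': "e \<in> NN" using E_split[OF e] by auto
      have noq: "\<forall>i\<in>I. e \<notin> set (pe (qs i))" using qs_FIN False by auto
      have "Phi e y' \<le> \<eta>3 * L * A"
      proof (cases "y' > 0")
        case False
        hence "y' = 0" using y' by simp
        thus ?thesis using Phi0 Err2nn by simp
      next
        case True
        obtain p where p: "p \<in> P" "e \<in> set (pe p)" "\<not> bad p"
          using rr4[OF noq] True by (auto simp: y'_def)
        have cy: "c e y \<le> LC" using p unfolding bad_def y_def by (auto simp: not_less)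
        have yy: "y' \<le> y" using rr3[OF noq] by (simp add: y_def y'_def)
        have cy': "c e y' \<le> L * C" using cmono'[OF e y'(1) yy] cy by (simp add: LC_def)
        have yl: "y' < M * \<eta>3"
        proof (rule ccontr)
          assume "\<not> y' < M * \<eta>3"
          hence "c e (M * \<eta>3) \<le> c e y'" using par MC by (intro cmono'[OF e]) auto
          thus False using fN eN' cy' by fastforce
        qed
        have "Phi e y' \<le> y' * c e y'" by (rule Phi_le[OF e y'(1)])
        also have "\<dots> \<le> (M * \<eta>3) * (L * C)"
          using yl cy' y' cnonneg[OF e y'(1)] by (intro mult_mono) auto
        finally show ?thesis by (simp add: A_def algebra_simps)
      qed
      thus ?thesis using yc Err2nn by (simp add: Err2_def y_def y'_def)
    qed
  qed
  have Pot2: "Pot g' \<le> kappa * SC g + real (card E) * Err2"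
  proof -
    have "Pot g' \<le> (\<Sum>e\<in>E. kappa * (ld g e * c e (ld g e)) + Err2)"
      unfolding Pot_def by (rule sum_mono) (rule gedge)
    also have "\<dots> = kappa * SC g + real (card E) * Err2"
      by (simp add: social_cost_def sum.distrib sum_distrib_left)
    finally show ?thesis .
  qed
  have SC2: "SC f \<le> SC g + real (card E) * (Err2 / kappa + Err1)"
  proof -
    have "SC f \<le> Pot f / kappa + real (card E) * Err1" by (rule SC1)
    also have "\<dots> \<le> (kappa * SC g + real (card E) * Err2) / kappa + real (card E) * Err1"
      using Pot1 Pot2 k by (simp add: divide_right_mono)
    also have "\<dots> = SC g + real (card E) * (Err2 / kappa + Err1)"
      using k by (simp add: field_simps)
    finally show ?thesis .
  qed
  define Err3 where "Err3 = (\<eta>1 * A + Kc * Kc * A / L + \<eta>3 * L * A) / kappa + \<eta>1 * A / kappa + \<eta>1 * A + \<eta>2 * Kc * A"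
  have Err3nn: "0 \<le> Err3" unfolding Err3_def using Err1nn par A Kc k
    by (intro add_nonneg_nonneg divide_nonneg_nonneg mult_nonneg_nonneg) auto
  show ?thesis
  proof (cases "SC f \<le> SC g")
    case True
    have "0 \<le> real (card E) * Err3" using Err3nn by simp
    thus ?thesis using True by (simp add: Err3_def[symmetric] A_def[symmetric])
  next
    case False
    have "R * LC \<le> Kc * A" using RLC False SCf by simp
    hence "R * Kc * C \<le> Kc * Kc * A / L"
    proof -
      assume h: "R * LC \<le> Kc * A"
      have "R * Kc * C * L = Kc * (R * LC)" by (simp add: LC_def algebra_simps)
      also have "\<dots> \<le> Kc * (Kc * A)" using h Kc by (intro mult_left_mono) auto
      finally have "R * Kc * C * L \<le> Kc * Kc * A" by simp
      thus ?thesis using par by (simp add: pos_le_divide_eq)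
    qed
    hence "Err2 / kappa + Err1 \<le> Err3"
      using k by (simp add: Err2_def Err1_def Err3_def divide_right_mono)
    hence "real (card E) * (Err2 / kappa + Err1) \<le> real (card E) * Err3"
      by (intro mult_left_mono) auto
    thus ?thesis using SC2 by (simp add: Err3_def A_def)
  qed
qed

end

lemma avg_exists:
  fixes a :: "'x \<Rightarrow> real"
  assumes "finite S" "S \<noteq> {}"
  shows "\<exists>x\<in>S. a x \<ge> (\<Sum>y\<in>S. a y) / real (card S)"
proof (rule ccontr)
  assume "\<not> ?thesis"
  hence lt: "\<And>x. x \<in> S \<Longrightarrow> a x < (\<Sum>y\<in>S. a y) / real (card S)" by auto
  have "(\<Sum>x\<in>S. a x) < (\<Sum>x\<in>S. (\<Sum>y\<in>S. a y) / real (card S))"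
    by (rule sum_strict_mono[OF assms lt])
  also have "\<dots> = (\<Sum>y\<in>S. a y)" using assms by simp
  finally show False by simp
qed

lemma ev_const:
  assumes "finite S" and "\<forall>\<^sub>F M in F'. 0 \<le> b M"
    and "\<And>e. e \<in> S \<Longrightarrow> \<exists>\<gamma>>0. \<forall>\<^sub>F M in F'. \<gamma> * b M \<le> a e M"
  shows "\<exists>\<gamma>>0. \<forall>\<^sub>F M in F'. \<forall>e\<in>S. \<gamma> * b M \<le> (a e M :: real)"
  using assms(1,3)
proof (induction S rule: finite_induct)
  case empty thus ?case by (intro exI[of _ 1]) auto
next
  case (insert x S)
  obtain \<gamma>1 where g1: "\<gamma>1 > 0" "\<forall>\<^sub>F M in F'. \<forall>e\<in>S. \<gamma>1 * b M \<le> a e M" using insert by auto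
  obtain \<gamma>2 where g2: "\<gamma>2 > 0" "\<forall>\<^sub>F M in F'. \<gamma>2 * b M \<le> a x M" using insert by auto
  show ?case
  proof (intro exI[of _ "min \<gamma>1 \<gamma>2"] conjI)
    show "min \<gamma>1 \<gamma>2 > 0" using g1 g2 by simp
    show "\<forall>\<^sub>F M in F'. \<forall>e\<in>insert x S. min \<gamma>1 \<gamma>2 * b M \<le> a e M"
      using g1(2) g2(2) assms(2)
    proof eventually_elim
      case (elim M)
      have "min \<gamma>1 \<gamma>2 * b M \<le> \<gamma>1 * b M" "min \<gamma>1 \<gamma>2 * b M \<le> \<gamma>2 * b M"
        using elim by (auto intro: mult_right_mono)
      thus ?case using elim by force
    qed
  qed
qed

context mainloc begin

lemma LB:
  assumes Ine: "I \<noteq> {}"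
  shows "\<exists>\<delta>>0. \<forall>\<^sub>F M in F. \<forall>m g. (\<forall>i\<in>I. 0 \<le> m i) \<longrightarrow> (\<Sum>i\<in>I. m i) = M \<longrightarrow> feas m g
           \<longrightarrow> \<delta> * (M * cb M) \<le> SC g"
proof -
  have Pne: "P \<noteq> {}" using Ine ex_path by blast
  define \<beta> where "\<beta> = 1 / (real (card I) * real (card P))"
  have cI: "card I > 0" using Ine fI by (simp add: card_gt_0_iff)
  have cP: "card P > 0" using Pne fP by (simp add: card_gt_0_iff)
  have b: "\<beta> > 0" using cI cP by (simp add: \<beta>_def)
  define GS where "GS = {e\<in>E. al e > 0}"
  have "\<exists>\<gamma>>0. \<forall>\<^sub>F M in F. \<forall>e\<in>GS. \<gamma> * cb M \<le> c e (M * \<beta>)"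
  proof (rule ev_const)
    show "finite GS" using fE by (simp add: GS_def)
    show "\<forall>\<^sub>F M in F. 0 \<le> cb M" using Fpos by eventually_elim (use cbpos in \<open>auto intro: less_imp_le\<close>)
    fix e assume e: "e \<in> GS"
    hence eE: "e \<in> E" and ap: "al e > 0" by (auto simp: GS_def)
    show "\<exists>\<gamma>>0. \<forall>\<^sub>F M in F. \<gamma> * cb M \<le> c e (M * \<beta>)"
    proof (cases "e \<in> FIN")
      case True
      have fl: "((\<lambda>x. c e x / cb x) \<longlongrightarrow> ar e) F" "al e = ereal (ar e)" using fin_lim[OF True] by auto
      have arp: "ar e > 0" using fl(2) ap by simp
      show ?thesis
        by (intro exI[of _ "ar e * h \<beta> / 2"] conjI low_edge[OF fl(1) arp b]) (use arp h_pos[OF b] in simp)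
    next
      case False
      hence "e \<in> NN" using E_split[OF eE] by auto
      from inf_edge[OF inf_lim[OF this] b, of 1]
      have "\<forall>\<^sub>F M in F. 1 * cb M \<le> c e (M * \<beta>)" by eventually_elim auto
      thus ?thesis by (intro exI[of _ 1]) auto
    qed
  qed
  then obtain \<gamma> where gam: "\<gamma> > 0" "\<forall>\<^sub>F M in F. \<forall>e\<in>GS. \<gamma> * cb M \<le> c e (M * \<beta>)" by auto
  show ?thesis
  proof (intro exI[of _ "\<beta> * \<gamma>"] conjI)
    show "\<beta> * \<gamma> > 0" using b gam by simp
    show "\<forall>\<^sub>F M in F. \<forall>m g. (\<forall>i\<in>I. 0 \<le> m i) \<longrightarrow> (\<Sum>i\<in>I. m i) = M \<longrightarrow> feas m g
           \<longrightarrow> \<beta> * \<gamma> * (M * cb M) \<le> SC g"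
      using gam(2) Fpos
    proof eventually_elim
      case (elim M)
      show ?case
      proof (intro allI impI)
        fix m g assume m: "\<forall>i\<in>I. 0 \<le> m i" and sm: "(\<Sum>i\<in>I. m i) = M" and g: "feas m g"
        have cbM: "cb M > 0" using cbpos elim by auto
        obtain i where i: "i \<in> I" "m i \<ge> M / real (card I)" using avg_exists[OF fI Ine, of m] sm by auto
        let ?Q = "{p\<in>P. od p = i}"
        have Qf: "finite ?Q" "?Q \<noteq> {}" using fP ex_path[OF i(1)] by auto
        obtain p where p: "p \<in> ?Q" "g p \<ge> (\<Sum>q\<in>?Q. g q) / real (card ?Q)"
          using avg_exists[OF Qf] by blast
        have sQ: "(\<Sum>q\<in>?Q. g q) = m i" using g i by (simp add: feasible_flow_def)
        have cQ: "card ?Q \<le> card P" "card ?Q > 0" using fP Qf by (auto intro: card_mono simp: card_gt_0_iff)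
        have mi0: "0 \<le> m i" using m i by auto
        have "M * \<beta> = (M / real (card I)) / real (card P)" by (simp add: \<beta>_def)
        also have "\<dots> \<le> m i / real (card P)" by (rule divide_right_mono) (use i in auto)
        also have "\<dots> \<le> m i / real (card ?Q)" using cQ mi0 by (intro divide_left_mono) auto
        also have "\<dots> \<le> g p" using p sQ by simp
        finally have gp: "M * \<beta> \<le> g p" .
        have pP: "p \<in> P" using p by auto
        obtain e where e: "e \<in> set (pe p)" "al e > 0" using pos_edge[OF pP] by auto
        have eE: "e \<in> E" using peE[OF pP] e by auto
        have eG: "e \<in> GS" using eE e by (simp add: GS_def)
        have "g p \<le> ld g e" unfolding load_def using pP e g fP
          by (intro member_le_sum) (auto simp: feasible_flow_def)
        hence ldb: "M * \<beta> \<le> ld g e" using gp by simp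
        have Mb: "0 \<le> M * \<beta>" using elim b by simp
        have ce: "\<gamma> * cb M \<le> c e (ld g e)"
          using elim eG cmono'[OF eE Mb ldb] by fastforce
        have "\<beta> * \<gamma> * (M * cb M) = (M * \<beta>) * (\<gamma> * cb M)" by (simp add: algebra_simps)
        also have "\<dots> \<le> ld g e * c e (ld g e)"
          using ldb ce Mb gam(1) cbM by (intro mult_mono) auto
        also have "\<dots> \<le> SC g" unfolding social_cost_def
          by (rule member_le_sum[OF eE _ fE]) (use ld_nonneg[OF g] cnonneg in auto)
        finally show "\<beta> * \<gamma> * (M * cb M) \<le> SC g" .
      qed
    qed
  qed
qed

end

lemma arith_bound:
  fixes nE Kc kappa \<theta> A L \<eta>1 \<eta>2 \<eta>3 n1 k1 :: real
  assumes nE: "0 \<le> nE" and Kc: "0 \<le> Kc" and k: "0 < kappa" "kappa \<le> 1" and th: "0 < \<theta>" and A: "0 < A"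
    and n1: "n1 = nE + 1" and k1: "k1 = Kc + 1"
    and L_def: "L = 4 * n1 * k1^2 / (kappa * \<theta>)"
    and \<eta>1_def: "\<eta>1 = \<theta> * kappa / (12 * n1)"
    and \<eta>2_def: "\<eta>2 = \<theta> / (4 * n1 * k1)"
    and \<eta>3_def: "\<eta>3 = \<theta> * kappa / (4 * n1 * L)"
  shows "nE * ((\<eta>1 * A + Kc * Kc * A / L + \<eta>3 * L * A) / kappa + \<eta>1 * A / kappa + \<eta>1 * A + \<eta>2 * Kc * A) \<le> \<theta> * A"
proof -
  have n1p: "0 < n1" using n1 nE by simp
  have k1p: "0 < k1" using k1 Kc by simp
  define q where "q = nE * \<theta> / n1"
  have q: "0 \<le> q" "q \<le> \<theta>" using nE th n1p n1 by (auto simp: q_def divide_le_eq)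
  have Lp: "L > 0" using n1p k1p k th by (simp add: L_def)
  have e1: "nE * \<eta>1 / kappa = q / 12" using n1p k by (simp add: \<eta>1_def q_def field_simps)
  have e2: "nE * (Kc * Kc / (L * kappa)) = q * (Kc * Kc / (k1 * k1)) / 4"
    using n1p k1p k th by (simp add: L_def q_def field_simps power2_eq_square)
  have e3: "nE * (\<eta>3 * L / kappa) = q / 4" using n1p k Lp by (simp add: \<eta>3_def q_def field_simps)
  have e4: "nE * (\<eta>2 * Kc) = q * (Kc / k1) / 4" using n1p k1p by (simp add: \<eta>2_def q_def field_simps)
  have b2: "Kc * Kc / (k1 * k1) \<le> 1" using Kc k1 by (simp add: divide_le_eq mult_mono)
  have b4: "Kc / k1 \<le> 1" using Kc k1 by (simp add: divide_le_eq)
  have b1: "nE * \<eta>1 \<le> nE * \<eta>1 / kappa"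
  proof -
    have "0 \<le> nE * \<eta>1" using nE th k n1p by (simp add: \<eta>1_def)
    hence "nE * \<eta>1 * kappa \<le> nE * \<eta>1" using k by (simp add: mult_right_le_one_le)
    thus ?thesis using k by (simp add: le_divide_eq)
  qed
  have eq: "nE * ((\<eta>1 * A + Kc * Kc * A / L + \<eta>3 * L * A) / kappa + \<eta>1 * A / kappa + \<eta>1 * A + \<eta>2 * Kc * A)
     = A * (2 * (nE * \<eta>1 / kappa) + nE * \<eta>1 + nE * (Kc * Kc / (L * kappa)) + nE * (\<eta>3 * L / kappa) + nE * (\<eta>2 * Kc))"
    using k Lp by (simp add: field_simps)
  have "2 * (nE * \<eta>1 / kappa) + nE * \<eta>1 + nE * (Kc * Kc / (L * kappa)) + nE * (\<eta>3 * L / kappa) + nE * (\<eta>2 * Kc)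
        \<le> 2 * (q / 12) + q / 12 + q / 4 + q / 4 + q / 4"
  proof -
    have "q * (Kc * Kc / (k1 * k1)) \<le> q" by (rule mult_left_le[OF b2 q(1)])
    hence "q * (Kc * Kc / (k1 * k1)) / 4 \<le> q / 4" by (rule divide_right_mono) simp
    moreover have "q * (Kc / k1) \<le> q" by (rule mult_left_le[OF b4 q(1)])
    hence "q * (Kc / k1) / 4 \<le> q / 4" by (rule divide_right_mono) simp
    moreover have "nE * \<eta>1 \<le> q / 12" using b1 e1 by simp
    ultimately show ?thesis unfolding e1 e2 e3 e4 by linarith
  qed
  also have "\<dots> = q" by simp
  also have "\<dots> \<le> \<theta>" by (rule q(2))
  finally show ?thesis unfolding eq using A by (simp add: mult_le_cancel_left_pos mult.commute)
qed

context mainloc begin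

lemma UB:
  assumes th: "\<theta> > 0"
  shows "\<forall>\<^sub>F M in F. \<forall>m f g. (\<forall>i\<in>I. 0 \<le> m i) \<longrightarrow> (\<Sum>i\<in>I. m i) = M \<longrightarrow>
           wardrop_eq I P od pe c m f \<longrightarrow> feas m g \<longrightarrow> SC f \<le> SC g + \<theta> * (M * cb M)"
proof -
  define nE where "nE = real (card E)"
  define n1 where "n1 = nE + 1"
  define k1 where "k1 = Kc + 1"
  have nE: "0 \<le> nE" by (simp add: nE_def)
  have k: "0 < kappa" "kappa \<le> 1" using kappa_pos kappa_le by auto
  have Kc: "0 \<le> Kc" by (rule Kc_nn)
  define L where "L = 4 * n1 * k1^2 / (kappa * \<theta>)"
  define \<eta>1 where "\<eta>1 = \<theta> * kappa / (12 * n1)"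
  define \<eta>2 where "\<eta>2 = \<theta> / (4 * n1 * k1)"
  define \<eta>3 where "\<eta>3 = \<theta> * kappa / (4 * n1 * L)"
  have n1p: "0 < n1" using nE by (simp add: n1_def)
  have k1p: "0 < k1" using Kc by (simp add: k1_def)
  have pos: "0 < L" "0 < \<eta>1" "0 < \<eta>2" "0 < \<eta>3"
    using n1p k1p k th by (auto simp: L_def \<eta>1_def \<eta>2_def \<eta>3_def)
  have finFIN: "finite FIN" using fE by (simp add: FIN_def)
  have finNN: "finite NN" using fE by (simp add: NN_def)
  have FE: "e \<in> E" if "e \<in> FIN" for e using that by (simp add: FIN_def)
  have ev1: "\<forall>\<^sub>F M in F. M > 0 \<and> cb M > 0" using Fpos by eventually_elim (use cbpos in auto)
  have ev2: "\<forall>\<^sub>F M in F. \<forall>e\<in>FIN. c e M \<le> (ar e + 1) * cb M"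
  proof (rule eventually_ball_finite[OF finFIN], rule ballI)
    fix e assume e: "e \<in> FIN"
    show "\<forall>\<^sub>F M in F. c e M \<le> (ar e + 1) * cb M" using fin_edge fin_lim[OF e] by blast
  qed
  have ev3: "\<forall>\<^sub>F M in F. \<forall>e\<in>FIN. ar e > 0 \<longrightarrow>
      (\<forall>z. 0 \<le> z \<and> z \<le> M \<longrightarrow> \<bar>Phi e z - kappa * z * c e z\<bar> \<le> \<eta>1 * M * cb M)"
  proof (rule eventually_ball_finite[OF finFIN], rule ballI)
    fix e assume e: "e \<in> FIN"
    show "\<forall>\<^sub>F M in F. ar e > 0 \<longrightarrow>
      (\<forall>z. 0 \<le> z \<and> z \<le> M \<longrightarrow> \<bar>Phi e z - kappa * z * c e z\<bar> \<le> \<eta>1 * M * cb M)"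
    proof (cases "ar e > 0")
      case True
      have "\<forall>\<^sub>F M in F. \<forall>z. 0 \<le> z \<and> z \<le> M \<longrightarrow> \<bar>integral {0..z} (c e) - kappa * z * c e z\<bar> \<le> \<eta>1 * M * cb M"
        by (rule UA[OF cmono[OF FE[OF e]] cnonneg[OF FE[OF e]] True _ pos(2)]) (use fin_lim[OF e] in auto)
      thus ?thesis by eventually_elim (simp add: Phi_def)
    next
      case False thus ?thesis by simp
    qed
  qed
  have ev4: "\<forall>\<^sub>F M in F. \<forall>e\<in>FIN. ar e = 0 \<longrightarrow> c e M \<le> \<eta>1 * cb M"
  proof (rule eventually_ball_finite[OF finFIN], rule ballI)
    fix e assume e: "e \<in> FIN"
    show "\<forall>\<^sub>F M in F. ar e = 0 \<longrightarrow> c e M \<le> \<eta>1 * cb M"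
    proof (cases "ar e = 0")
      case True
      have "((\<lambda>x. c e x / cb x) \<longlongrightarrow> 0) F" using fin_lim[OF e] True by simp
      from zero_edge[OF this pos(2)] show ?thesis by eventually_elim simp
    next
      case False thus ?thesis by simp
    qed
  qed
  have ev5: "\<forall>\<^sub>F M in F. \<forall>e\<in>NN. c e (M * \<eta>2) > Kc * cb M"
    by (rule eventually_ball_finite[OF finNN], rule ballI, rule inf_edge[OF inf_lim pos(3)])
  have ev6: "\<forall>\<^sub>F M in F. \<forall>e\<in>NN. c e (M * \<eta>3) > L * cb M"
    by (rule eventually_ball_finite[OF finNN], rule ballI, rule inf_edge[OF inf_lim pos(4)])
  from ev1 ev2 ev3 ev4 ev5 ev6 show ?thesis
  proof eventually_elim
    case (elim M)
    show ?case
    proof (intro allI impI)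
      fix m f g assume m: "\<forall>i\<in>I. 0 \<le> m i" and sm: "(\<Sum>i\<in>I. m i) = M"
        and f: "wardrop_eq I P od pe c m f" and g: "feas m g"
      have "SC f \<le> SC g + real (card E) * ((\<eta>1 * (M * cb M) + Kc * Kc * (M * cb M) / L + \<eta>3 * L * (M * cb M)) / kappa
            + \<eta>1 * (M * cb M) / kappa + \<eta>1 * (M * cb M) + \<eta>2 * Kc * (M * cb M))"
        by (rule core) (use elim pos m sm f g in auto)
      also have "\<dots> \<le> SC g + \<theta> * (M * cb M)"
        using arith_bound[OF nE Kc k th _ n1_def k1_def L_def \<eta>1_def \<eta>2_def \<eta>3_def, of "M * cb M"] elim
        by (simp add: nE_def)
      finally show "SC f \<le> SC g + \<theta> * (M * cb M)" .
    qed
  qed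
qed

end

lemma omega_props:
  assumes om: "\<omega> = 0 \<or> \<omega> = \<infinity>"
  shows "omega_filter \<omega> \<noteq> bot"
    and "\<forall>\<^sub>F x in omega_filter \<omega>. x > 0"
    and "\<And>s. s > 0 \<Longrightarrow> filterlim (\<lambda>x. x * s) (omega_filter \<omega>) (omega_filter \<omega>)"
    and "\<And>G \<eta>. eventually G (omega_filter \<omega>) \<Longrightarrow> 0 < \<eta> \<Longrightarrow> \<eta> \<le> 1 \<Longrightarrow>
                  \<forall>\<^sub>F M in omega_filter \<omega>. \<forall>z. \<eta> * M \<le> z \<and> z \<le> M \<longrightarrow> G z"
proof -
  have pos0: "\<forall>\<^sub>F x in at_right (0::real). x > 0"
    by (simp add: eventually_at_right_field) (rule exI[of _ 1], simp)
  consider "omega_filter \<omega> = at_right 0" | "omega_filter \<omega> = at_top"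
    using om by (auto simp: omega_filter_def)
  note cs = this
  show "omega_filter \<omega> \<noteq> bot" using cs by cases auto
  show "\<forall>\<^sub>F x in omega_filter \<omega>. x > 0" using cs by cases (use pos0 in auto)
  show "filterlim (\<lambda>x. x * s) (omega_filter \<omega>) (omega_filter \<omega>)" if s: "s > 0" for s
    using cs
  proof cases
    case 1
    have i: "((\<lambda>x::real. x) \<longlongrightarrow> 0) (at_right 0)" by (rule tendsto_ident_at)
    have t: "((\<lambda>x::real. x * s) \<longlongrightarrow> 0) (at_right 0)"
      using tendsto_mult[OF i tendsto_const[of s]] by simp
    have "\<forall>\<^sub>F x in at_right (0::real). x * s > 0" using pos0 by eventually_elim (use s in auto)
    from tendsto_imp_filterlim_at_right[OF t this] show ?thesis using 1 by simp
  next
    case 2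
    have "filterlim (\<lambda>x::real. x * s) at_top at_top"
      by (rule filterlim_at_top_mult_tendsto_pos[OF tendsto_const s filterlim_ident])
    thus ?thesis using 2 by simp
  qed
  show "\<forall>\<^sub>F M in omega_filter \<omega>. \<forall>z. \<eta> * M \<le> z \<and> z \<le> M \<longrightarrow> G z"
    if G: "eventually G (omega_filter \<omega>)" and eta: "0 < \<eta>" "\<eta> \<le> 1" for G \<eta>
    using cs
  proof cases
    case 1
    then obtain b where b: "b > 0" "\<And>y. y > 0 \<Longrightarrow> y < b \<Longrightarrow> G y"
      using G by (auto simp: eventually_at_right_field)
    have "\<forall>\<^sub>F M in at_right (0::real). M < b"
      by (simp add: eventually_at_right_field) (rule exI[of _ b], use b in auto)
    with pos0 have "\<forall>\<^sub>F M in at_right (0::real). \<forall>z. \<eta> * M \<le> z \<and> z \<le> M \<longrightarrow> G z"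
    proof eventually_elim
      case (elim M)
      show ?case
      proof (intro allI impI)
        fix z assume z: "\<eta> * M \<le> z \<and> z \<le> M"
        have "0 < \<eta> * M" using eta elim by simp
        thus "G z" using b z elim by auto
      qed
    qed
    thus ?thesis using 1 by simp
  next
    case 2
    then obtain N where N: "\<And>n. n \<ge> N \<Longrightarrow> G n" using G by (auto simp: eventually_at_top_linorder)
    have "\<forall>\<^sub>F M in at_top. M \<ge> N / \<eta>" by simp
    hence "\<forall>\<^sub>F M in at_top. \<forall>z. \<eta> * M \<le> z \<and> z \<le> M \<longrightarrow> G z"
    proof eventually_elim
      case (elim M)
      have "N \<le> \<eta> * M" using elim eta by (simp add: divide_le_eq mult.commute)
      thus ?case using N by auto
    qed
    thus ?thesis using 2 by simp
  qed
qed

theorem corollary6p3: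
  fixes E :: "'e set" and src tgt :: "'e \<Rightarrow> 'v"
    and I :: "'i set" and orig dest :: "'i \<Rightarrow> 'v"
    and P :: "'p set" and od :: "'p \<Rightarrow> 'i" and pe :: "'p \<Rightarrow> 'e list"
    and c :: "'e \<Rightarrow> real \<Rightarrow> real"
    and m :: "nat \<Rightarrow> 'i \<Rightarrow> real"
    and \<omega> :: ereal and cb :: "real \<Rightarrow> real"
  assumes net: "routing_network E src tgt I orig dest P od pe c"
    and dem_nonneg: "\<And>n i. i \<in> I \<Longrightarrow> m n i \<ge> 0"
    and inflow_pos: "\<And>n. (\<Sum>i\<in>I. m n i) > 0"
    and omega: "\<omega> = 0 \<or> \<omega> = \<infinity>"
    and inflow_lim: "((\<lambda>n. ereal (\<Sum>i\<in>I. m n i)) \<longlongrightarrow> \<omega>) sequentially"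
    and bench: "benchmark \<omega> E c cb"
    and tight: "\<And>i. i \<in> I \<Longrightarrow> 0 < alpha_od \<omega> P od pe c cb i \<and> alpha_od \<omega> P od pe c cb i < \<infinity>"
  shows "(\<lambda>n. PoA E I P od pe c (m n)) \<longlonglongrightarrow> 1"
proof -
  define F where "F = omega_filter \<omega>"
  define Mn where "Mn = (\<lambda>n. \<Sum>i\<in>I. m n i)"
  have rn: "rnet E I P od pe c"
    using net unfolding routing_network_def rnet_def by auto
  have Ine: "I \<noteq> {}" using inflow_pos[of 0] by auto
  note op = omega_props[OF omega, folded F_def]
  have rvc: "regularly_varying \<omega> cb" and blim0: "\<forall>e\<in>E. \<exists>a::ereal. a \<ge> 0 \<and> ((\<lambda>x. ereal (c e x / cb x)) \<longlongrightarrow> a) F"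
    using bench by (auto simp: benchmark_def F_def)
  have cbpos: "\<And>x. x > 0 \<Longrightarrow> cb x > 0" and rv: "\<And>s. s > 0 \<Longrightarrow> \<exists>L. L \<noteq> 0 \<and> ((\<lambda>t. cb (t * s) / cb t) \<longlongrightarrow> L) F"
    using rvc by (auto simp: regularly_varying_def F_def)
  have Lim_eq: "Lim F (\<lambda>x. ereal (c e x / cb x)) = a" if "((\<lambda>x. ereal (c e x / cb x)) \<longlongrightarrow> a) F" for e a
    by (rule tendsto_Lim) (use op(1) that in auto)
  have tight': "0 < (INF p\<in>{p\<in>P. od p = i}. SUP e\<in>set (pe p). Lim F (\<lambda>x. ereal (c e x / cb x))) \<and>
      (INF p\<in>{p\<in>P. od p = i}. SUP e\<in>set (pe p). Lim F (\<lambda>x. ereal (c e x / cb x))) < \<infinity>" if i: "i \<in> I" for i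
    using tight[OF i] by (simp add: alpha_od_def alpha_edge_def F_def)
  have wit: "\<exists>ce a. a > 0 \<and> mono_on {0..} ce \<and> ((\<lambda>x. ce x / cb x) \<longlongrightarrow> a) F"
  proof -
    obtain i where i: "i \<in> I" using Ine by auto
    let ?al = "\<lambda>e. Lim F (\<lambda>x. ereal (c e x / cb x))"
    have "(INF p\<in>{p\<in>P. od p = i}. SUP e\<in>set (pe p). ?al e) < \<infinity>" using tight'[OF i] by simp
    hence "\<exists>p\<in>{p\<in>P. od p = i}. (SUP e\<in>set (pe p). ?al e) < \<infinity>" by (simp only: INF_less_iff)
    then obtain p where p: "p \<in> {p\<in>P. od p = i}" "(SUP e\<in>set (pe p). ?al e) < \<infinity>" by blast
    have "0 < (INF p\<in>{p\<in>P. od p = i}. SUP e\<in>set (pe p). ?al e)" using tight'[OF i] by simp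
    also have "\<dots> \<le> (SUP e\<in>set (pe p). ?al e)" by (rule INF_lower[OF p(1)])
    finally have "0 < (SUP e\<in>set (pe p). ?al e)" .
    hence "\<exists>e\<in>set (pe p). 0 < ?al e" by (simp only: less_SUP_iff)
    then obtain e where e: "e \<in> set (pe p)" "0 < ?al e" by blast
    have "?al e \<le> (SUP e\<in>set (pe p). ?al e)" using e(1) by (rule SUP_upper)
    hence fin: "?al e < \<infinity>" using p(2) by (rule le_less_trans)
    have eE: "e \<in> E" using rnet.peE[OF rn, of p] p e by auto
    obtain a :: ereal where a: "a \<ge> 0" "((\<lambda>x. ereal (c e x / cb x)) \<longlongrightarrow> a) F" using blim0 eE by auto
    have ae: "?al e = a" using Lim_eq[OF a(2)] .
    obtain r where r: "a = ereal r" using fin a(1) ae by (cases a) auto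
    have "((\<lambda>x. c e x / cb x) \<longlongrightarrow> r) F" using a(2) r by simp
    moreover have "r > 0" using e(2) ae r by simp
    moreover have "mono_on {0..} (c e)" using rnet.cmono[OF rn eE] .
    ultimately show ?thesis by blast
  qed
  have asyF: "asy F cb"
    by (rule asy.intro) (use op cbpos rv wit in auto)
  have ml: "mainloc E I P od pe c F cb"
    by (intro mainloc.intro rn asyF mainloc_axioms.intro) (use blim0 tight' in auto)
  interpret mainloc E I P od pe c F cb by (rule ml)
  have Mlim: "filterlim Mn F sequentially"
    using omega
  proof
    assume w: "\<omega> = 0"
    hence "((\<lambda>n. ereal (Mn n)) \<longlongrightarrow> ereal 0) sequentially" using inflow_lim by (simp add: Mn_def zero_ereal_def)
    hence t: "(Mn \<longlongrightarrow> 0) sequentially" by (simp only: lim_ereal)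
    have "\<forall>\<^sub>F n in sequentially. Mn n > 0" using inflow_pos by (simp add: Mn_def)
    from tendsto_imp_filterlim_at_right[OF t this] show ?thesis using w by (simp add: F_def omega_filter_def)
  next
    assume w: "\<omega> = \<infinity>"
    hence "((\<lambda>n. ereal (Mn n)) \<longlongrightarrow> \<infinity>) sequentially" using inflow_lim by (simp add: Mn_def)
    hence "filterlim Mn at_top sequentially" by (simp only: tendsto_PInfty_eq_at_top)
    thus ?thesis using w by (simp add: F_def omega_filter_def)
  qed
  obtain \<delta> where d: "\<delta> > 0" and lb: "\<forall>\<^sub>F M in F. \<forall>m g. (\<forall>i\<in>I. 0 \<le> m i) \<longrightarrow> (\<Sum>i\<in>I. m i) = M \<longrightarrow> feas m g
           \<longrightarrow> \<delta> * (M * cb M) \<le> SC g"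
    using LB[OF Ine] by auto
  show ?thesis
    unfolding tendsto_iff
  proof (intro allI impI)
    fix \<epsilon> :: real assume eps: "\<epsilon> > 0"
    define \<theta> where "\<theta> = \<epsilon> * \<delta> / 2"
    have th: "\<theta> > 0" using eps d by (simp add: \<theta>_def)
    have ev: "\<forall>\<^sub>F M in F. M > 0 \<and> (\<forall>m g. (\<forall>i\<in>I. 0 \<le> m i) \<longrightarrow> (\<Sum>i\<in>I. m i) = M \<longrightarrow> feas m g
           \<longrightarrow> \<delta> * (M * cb M) \<le> SC g) \<and> (\<forall>m f g. (\<forall>i\<in>I. 0 \<le> m i) \<longrightarrow> (\<Sum>i\<in>I. m i) = M \<longrightarrow>
           wardrop_eq I P od pe c m f \<longrightarrow> feas m g \<longrightarrow> SC f \<le> SC g + \<theta> * (M * cb M))"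
      using lb UB[OF th] Fpos by eventually_elim auto
    from eventually_compose_filterlim[OF ev Mlim]
    show "\<forall>\<^sub>F n in sequentially. dist (PoA E I P od pe c (m n)) 1 < \<epsilon>"
    proof eventually_elim
      case (elim n)
      define M where "M = Mn n"
      define mm where "mm = m n"
      have M: "M > 0" using elim by (simp add: M_def)
      have cbM: "cb M > 0" using cbpos M by simp
      define A where "A = M * cb M"
      have A: "A > 0" using M cbM by (simp add: A_def)
      have mm: "\<forall>i\<in>I. 0 \<le> mm i" "(\<Sum>i\<in>I. mm i) = M" using dem_nonneg by (auto simp: mm_def M_def Mn_def)
      obtain fe where "wardrop_eq I P od pe c mm fe" using eq_exists[of mm] mm by auto
      hence f0: "wardrop_eq I P od pe c mm (SOME f. wardrop_eq I P od pe c mm f)" by (rule someI[of "\<lambda>f. wardrop_eq I P od pe c mm f"])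
      define f0 where "f0 = (SOME f. wardrop_eq I P od pe c mm f)"
      have f0w: "wardrop_eq I P od pe c mm f0" using f0 by (simp add: f0_def)
      have f0f: "feas mm f0" using f0w by (simp add: wardrop_eq_def)
      define S where "S = SC ` {f. feas mm f}"
      have Sne: "S \<noteq> {}" using f0f by (auto simp: S_def)
      have Sbdd: "bdd_below S" unfolding S_def by (rule bdd_belowI[of _ 0]) (auto intro: SC_nonneg)
      define Opt where "Opt = Inf S"
      define Eq where "Eq = SC f0"
      have lbS: "\<delta> * A \<le> Opt" unfolding Opt_def
        by (rule cInf_greatest[OF Sne]) (use elim mm in \<open>auto simp: S_def A_def M_def\<close>)
      have ubS: "Eq - \<theta> * A \<le> Opt" unfolding Opt_def
      proof (rule cInf_greatest[OF Sne])
        fix x assume "x \<in> S"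
        then obtain g where g: "feas mm g" "x = SC g" by (auto simp: S_def)
        have "Eq \<le> SC g + \<theta> * A" using elim mm f0w g unfolding Eq_def A_def M_def by blast
        thus "Eq - \<theta> * A \<le> x" using g by simp
      qed
      have optle: "Opt \<le> Eq" unfolding Opt_def Eq_def
        by (rule cInf_lower[OF _ Sbdd]) (use f0f in \<open>auto simp: S_def\<close>)
      have Optp: "Opt > 0" using lbS d A by (smt (verit) mult_pos_pos)
      have PoA: "PoA E I P od pe c (m n) = Eq / Opt"
        using Optp by (simp add: PoA_def eq_cost_def opt_cost_def Opt_def S_def Eq_def f0_def mm_def)
      have "\<bar>Eq / Opt - 1\<bar> = (Eq - Opt) / Opt" using Optp optle by (simp add: field_simps)
      also have "\<dots> \<le> (\<theta> * A) / Opt" using ubS Optp by (simp add: divide_right_mono)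
      also have "\<dots> \<le> (\<theta> * A) / (\<delta> * A)" using lbS th A d Optp by (intro divide_left_mono) (auto intro: mult_pos_pos)
      also have "\<dots> = \<epsilon> / 2" using A d by (simp add: \<theta>_def)
      also have "\<dots> < \<epsilon>" using eps by simp
      finally show ?case using PoA by (simp add: dist_real_def)
    qed
  qed
qed

end
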